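(* Let $\bm A=(A_1,\dots,A_d)$ be Hermitian matrices in $M_n(\mathbb{C})$, $B\in M_n(\mathbb{C})$, and $(\bm\lambda,\nu)\in\mathbb{R}^d\times\mathbb{C}$. Then $$\left|\dot\mu^{C}_{(\bm\lambda,\nu)}(\bm A,B)-\mu^{Q}_{(\bm\lambda,\nu)}(\bm A,B)\right|\le\sqrt{\sum_{i<j}\|[A_i,A_j]\|+\|F_{(\bm\lambda,\nu)}(\bm A,B)\|}.$$
   Context: Let $n,d,m$ be positive integers. Fix Hermitian matrices $\Gamma_1,\dots,\Gamma_d\in M_{2m}(\mathbb{C})$ with $\Gamma_i^2=I_{2m}$ and $\Gamma_i\Gamma_j=-\Gamma_j\Gamma_i$ for $i\neq j$ (a Clifford representation; the paper uses a specific one built from Pauli matrices). Write $P=\begin{bmatrix} I_m&0\\0&0_m\end{bmatrix}$ and $Q=\begin{bmatrix}0_m&0\\0&I_m\end{bmatrix}$ in $M_{2m}(\mathbb{C})$. For a $d$-tuple $\bm A=(A_1,\dots,A_d)$ of Hermitian matrices in $M_n(\mathbb{C})$, a matrix $B\in M_n(\mathbb{C})$ (not necessarily Hermitian or normal), and a probe site $(\bm\lambda,\nu)\in\mathbb{R}^d\times\mathbb{C}$, the non-Hermitian spectral localizer is $$L_{(\bm\lambda,\nu)}(\bm A,B)=\sum_{i=1}^d (A_i-\lambda_i I)\otimes\Gamma_i+(B-\nu I)\otimes P-(B-\nu I)^\dagger\otimes Q\in M_{2mn}(\mathbb{C}).$$ The Clifford radial gap is $\dot\mu^{C}_{(\bm\lambda,\nu)}(\bm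 A,B)=\sigma_{\min}\big(L_{(\bm\lambda,\nu)}(\bm A,B)\big)$. Define $$F_{(\bm\lambda,\nu)}(\bm A,B)=\sum_{i=1}^d\big(G_i+G_i^\dagger\big)-\sum_{i=1}^d\big(H_i+H_i^\dagger\big),\quad G_i=(A_i-\lambda_i I)(B-\nu I)\otimes\Gamma_iP,\quad H_i=(A_i-\lambda_i I)(B-\nu I)^\dagger\otimes\Gamma_iQ.$$ The quadratic gap (with one non-Hermitian matrix) is $\mu^{Q}_{(\bm\lambda,\nu)}(\bm A,B)=\sqrt{\lambda_{\min}(Q_{(\bm\lambda,\nu)}(\bm A,B))}$, where $Q_{(\bm\lambda,\nu)}(\bm A,B)=RQ\otimes\begin{bmatrix}1&0\\0&0\end{bmatrix}+LQ\otimes\begin{bmatrix}0&0\\0&1\end{bmatrix}$ with $RQ=\sum_{i=1}^d(A_i-\lambda_iI)^2+(B-\nu I)^\dagger(B-\nu I)$ and $LQ=\sum_{i=1}^d(A_i-\lambda_iI)^2+(B-\nu I)(B-\nu I)^\dagger$. Matrix norms are operator norms. *)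

theory Defs
  imports "Jordan_Normal_Form.Matrix" "Jordan_Normal_Form.Char_Poly"
begin

definition adj :: "complex mat \<Rightarrow> complex mat" where
  "adj M = mat (dim_col M) (dim_row M) (\<lambda>(i,j). cnj (M $$ (j,i)))"

definition hermitian :: "complex mat \<Rightarrow> bool" where
  "hermitian M \<longleftrightarrow> dim_row M = dim_col M \<and> adj M = M"

text \<open>Kronecker (tensor) product, first factor is the outer (block) index.\<close>
definition kron :: "complex mat \<Rightarrow> complex mat \<Rightarrow> complex mat" where
  "kron M N = mat (dim_row M * dim_row N) (dim_col M * dim_col N)
     (\<lambda>(i,j). M $$ (i div dim_row N, j div dim_col N) * N $$ (i mod dim_row N, j mod dim_col N))"

fun msum :: "nat \<Rightarrow> nat \<Rightarrow> (nat \<Rightarrow> complex mat) \<Rightarrow> nat \<Rightarrow> complex mat" where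
  "msum r c f 0 = 0\<^sub>m r c"
| "msum r c f (Suc k) = msum r c f k + f k"

definition vnorm :: "complex vec \<Rightarrow> real" where
  "vnorm v = sqrt (\<Sum>i<dim_vec v. (cmod (v $ i))\<^sup>2)"

definition opnorm :: "complex mat \<Rightarrow> real" where
  "opnorm M = Sup {vnorm (M *\<^sub>v v) | v. v \<in> carrier_vec (dim_col M) \<and> vnorm v = 1}"

text \<open>Smallest eigenvalue of a Hermitian matrix (eigenvalues are real).\<close>
definition lambda_min :: "complex mat \<Rightarrow> real" where
  "lambda_min M = Min {Re k | k. eigenvalue M k}"

definition sigma_min :: "complex mat \<Rightarrow> real" where
  "sigma_min M = sqrt (lambda_min (adj M * M))"

definition projP :: "nat \<Rightarrow> complex mat" where
  "projP m = mat (2*m) (2*m) (\<lambda>(i,j). if i = j \<and> i < m then 1 else 0)"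

definition projQ :: "nat \<Rightarrow> complex mat" where
  "projQ m = mat (2*m) (2*m) (\<lambda>(i,j). if i = j \<and> m \<le> i then 1 else 0)"

definition clifford_rep :: "nat \<Rightarrow> nat \<Rightarrow> (nat \<Rightarrow> complex mat) \<Rightarrow> bool" where
  "clifford_rep d m \<Gamma> \<longleftrightarrow>
     (\<forall>i<d. \<Gamma> i \<in> carrier_mat (2*m) (2*m) \<and> hermitian (\<Gamma> i) \<and> \<Gamma> i * \<Gamma> i = 1\<^sub>m (2*m)) \<and>
     (\<forall>i<d. \<forall>j<d. i \<noteq> j \<longrightarrow> \<Gamma> i * \<Gamma> j = - (\<Gamma> j * \<Gamma> i))"

definition shiftA :: "nat \<Rightarrow> (nat \<Rightarrow> complex mat) \<Rightarrow> (nat \<Rightarrow> real) \<Rightarrow> nat \<Rightarrow> complex mat" where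
  "shiftA n A lam i = A i - complex_of_real (lam i) \<cdot>\<^sub>m 1\<^sub>m n"

definition shiftB :: "nat \<Rightarrow> complex mat \<Rightarrow> complex \<Rightarrow> complex mat" where
  "shiftB n B nu = B - nu \<cdot>\<^sub>m 1\<^sub>m n"

definition localizer ::
  "nat \<Rightarrow> nat \<Rightarrow> nat \<Rightarrow> (nat \<Rightarrow> complex mat) \<Rightarrow> (nat \<Rightarrow> complex mat) \<Rightarrow> complex mat
   \<Rightarrow> (nat \<Rightarrow> real) \<Rightarrow> complex \<Rightarrow> complex mat" where
  "localizer n d m \<Gamma> A B lam nu =
     msum (2*m*n) (2*m*n) (\<lambda>i. kron (shiftA n A lam i) (\<Gamma> i)) d
     + kron (shiftB n B nu) (projP m) - kron (adj (shiftB n B nu)) (projQ m)"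

definition clifford_gap ::
  "nat \<Rightarrow> nat \<Rightarrow> nat \<Rightarrow> (nat \<Rightarrow> complex mat) \<Rightarrow> (nat \<Rightarrow> complex mat) \<Rightarrow> complex mat
   \<Rightarrow> (nat \<Rightarrow> real) \<Rightarrow> complex \<Rightarrow> real" where
  "clifford_gap n d m \<Gamma> A B lam nu = sigma_min (localizer n d m \<Gamma> A B lam nu)"

definition Fmat ::
  "nat \<Rightarrow> nat \<Rightarrow> nat \<Rightarrow> (nat \<Rightarrow> complex mat) \<Rightarrow> (nat \<Rightarrow> complex mat) \<Rightarrow> complex mat
   \<Rightarrow> (nat \<Rightarrow> real) \<Rightarrow> complex \<Rightarrow> complex mat" where
  "Fmat n d m \<Gamma> A B lam nu =
    (let X = shiftB n B nu;
         G = (\<lambda>i. kron (shiftA n A lam i * X) (\<Gamma> i * projP m));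
         H = (\<lambda>i. kron (shiftA n A lam i * adj X) (\<Gamma> i * projQ m))
     in msum (2*m*n) (2*m*n) (\<lambda>i. G i + adj (G i)) d
        - msum (2*m*n) (2*m*n) (\<lambda>i. H i + adj (H i)) d)"

definition quad_mat ::
  "nat \<Rightarrow> nat \<Rightarrow> (nat \<Rightarrow> complex mat) \<Rightarrow> complex mat \<Rightarrow> (nat \<Rightarrow> real) \<Rightarrow> complex \<Rightarrow> complex mat" where
  "quad_mat n d A B lam nu =
    (let X = shiftB n B nu;
         S = msum n n (\<lambda>i. shiftA n A lam i * shiftA n A lam i) d;
         RQ = S + adj X * X;
         LQ = S + X * adj X
     in kron RQ (mat 2 2 (\<lambda>(i,j). if i = 0 \<and> j = 0 then 1 else 0))
      + kron LQ (mat 2 2 (\<lambda>(i,j). if i = 1 \<and> j = 1 then 1 else 0)))"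

definition quad_gap ::
  "nat \<Rightarrow> nat \<Rightarrow> (nat \<Rightarrow> complex mat) \<Rightarrow> complex mat \<Rightarrow> (nat \<Rightarrow> real) \<Rightarrow> complex \<Rightarrow> real" where
  "quad_gap n d A B lam nu = sqrt (lambda_min (quad_mat n d A B lam nu))"

end

theory Submission
  imports Defs "HOL-Analysis.Function_Topology" "HOL-Analysis.Elementary_Metric_Spaces" "HOL-Analysis.L2_Norm"
begin

definition ip :: "complex vec \<Rightarrow> complex vec \<Rightarrow> complex" where
  "ip x y = (\<Sum>i<dim_vec x. cnj (x$i) * y$i)"

definition qf :: "complex mat \<Rightarrow> complex vec \<Rightarrow> complex" where
  "qf M v = (\<Sum>i<dim_vec v. \<Sum>j<dim_vec v. cnj (v$i) * M$$(i,j) * v$j)"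

lemma mv_entry: "A \<in> carrier_mat r c \<Longrightarrow> v \<in> carrier_vec c \<Longrightarrow> i < r \<Longrightarrow>
   (A *\<^sub>v v)$i = (\<Sum>j<c. A$$(i,j) * v$j)"
  by (auto simp: scalar_prod_def atLeast0LessThan row_def)

lemma mm_entry: "A \<in> carrier_mat r c \<Longrightarrow> B \<in> carrier_mat c e \<Longrightarrow> i < r \<Longrightarrow> j < e \<Longrightarrow>
   (A * B)$$(i,j) = (\<Sum>k<c. A$$(i,k) * B$$(k,j))"
  by (auto simp: scalar_prod_def atLeast0LessThan row_def col_def)

lemma vnorm_sq: "(vnorm v)\<^sup>2 = (\<Sum>i<dim_vec v. (cmod (v$i))\<^sup>2)"
  unfolding vnorm_def by (simp add: sum_nonneg)

lemma vnorm_nonneg: "vnorm v \<ge> 0" unfolding vnorm_def by (simp add: sum_nonneg)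

lemma ip_self: "ip v v = of_real ((vnorm v)\<^sup>2)"
  unfolding vnorm_sq ip_def of_real_sum
  by (rule sum.cong, simp, metis complex_norm_square mult.commute)

lemma qf_ip: "M \<in> carrier_mat N N \<Longrightarrow> v \<in> carrier_vec N \<Longrightarrow> qf M v = ip v (M *\<^sub>v v)"
  unfolding qf_def ip_def by (auto simp: scalar_prod_def row_def atLeast0LessThan sum_distrib_left mult.assoc intro!: sum.cong)

lemma ip_adj: assumes "Y \<in> carrier_mat r c" "x \<in> carrier_vec c" "z \<in> carrier_vec r"
  shows "ip x (adj Y *\<^sub>v z) = ip (Y *\<^sub>v x) z"
proof -
  have a: "adj Y \<in> carrier_mat c r" using assms unfolding adj_def by auto
  have "ip x (adj Y *\<^sub>v z) = (\<Sum>i<c. \<Sum>j<r. cnj (x$i) * (cnj (Y$$(j,i)) * z$j))"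
    unfolding ip_def using assms a by (auto simp: scalar_prod_def row_def atLeast0LessThan sum_distrib_left adj_def intro!: sum.cong)
  also have "\<dots> = (\<Sum>j<r. \<Sum>i<c. cnj (x$i) * (cnj (Y$$(j,i)) * z$j))" by (rule sum.swap)
  also have "\<dots> = ip (Y *\<^sub>v x) z"
    unfolding ip_def using assms by (auto simp: scalar_prod_def row_def atLeast0LessThan sum_distrib_right sum_distrib_left mult_ac intro!: sum.cong)
  finally show ?thesis .
qed

lemma cs: assumes "dim_vec y = dim_vec x" shows "cmod (ip x y) \<le> vnorm x * vnorm y"
proof -
  have "cmod (ip x y) \<le> (\<Sum>i<dim_vec x. cmod (x$i) * cmod (y$i))"
    unfolding ip_def by (rule order_trans[OF norm_sum]) (simp add: norm_mult)
  also have "\<dots> \<le> L2_set (\<lambda>i. cmod (x$i)) {..<dim_vec x} * L2_set (\<lambda>i. cmod (y$i)) {..<dim_vec x}"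
    using L2_set_mult_ineq[of "\<lambda>i. cmod (x$i)" "\<lambda>i. cmod (y$i)"] by simp
  also have "\<dots> = vnorm x * vnorm y" unfolding L2_set_def vnorm_def using assms by simp
  finally show ?thesis .
qed

lemma adj_dims[simp]: "dim_row (adj A) = dim_col A" "dim_col (adj A) = dim_row A"
  unfolding adj_def by auto

lemma adj_carrier[simp,intro]: "A \<in> carrier_mat r c \<Longrightarrow> adj A \<in> carrier_mat c r"
  unfolding adj_def by auto

lemma index_adj[simp]: "i < dim_col A \<Longrightarrow> j < dim_row A \<Longrightarrow> adj A $$ (i,j) = cnj (A $$ (j,i))"
  unfolding adj_def by auto

lemma adj_adj[simp]: "adj (adj A) = A"
  by (rule eq_matI) auto

lemma adj_mult: assumes "A \<in> carrier_mat r c" "B \<in> carrier_mat c e"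
  shows "adj (A * B) = adj B * adj A"
  using assms by (intro eq_matI) (auto simp: scalar_prod_def row_def col_def mult.commute)

lemma adj_add: assumes "A \<in> carrier_mat r c" "B \<in> carrier_mat r c"
  shows "adj (A + B) = adj A + adj B"
  using assms by (intro eq_matI) auto

lemma adj_minus: assumes "A \<in> carrier_mat r c" "B \<in> carrier_mat r c"
  shows "adj (A - B) = adj A - adj B"
  using assms by (intro eq_matI) auto

lemma adj_smult: "adj (a \<cdot>\<^sub>m A) = cnj a \<cdot>\<^sub>m adj A"
  by (intro eq_matI) auto

lemma adj_one[simp]: "adj (1\<^sub>m n) = 1\<^sub>m n"
  by (intro eq_matI) auto

lemma adj_zero[simp]: "adj (0\<^sub>m r c) = 0\<^sub>m c r"
  by (intro eq_matI) auto

lemma msum_carrier[simp,intro]: "(\<And>l. l < k \<Longrightarrow> f l \<in> carrier_mat r c) \<Longrightarrow> msum r c f k \<in> carrier_mat r c"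
  by (induction k) auto

lemma index_msum: "(\<And>l. l < k \<Longrightarrow> f l \<in> carrier_mat r c) \<Longrightarrow> i < r \<Longrightarrow> j < c \<Longrightarrow>
   msum r c f k $$ (i,j) = (\<Sum>l<k. f l $$ (i,j))"
proof (induction k)
  case 0 thus ?case by simp
next
  case (Suc k)
  have a: "msum r c f k \<in> carrier_mat r c" and b: "f k \<in> carrier_mat r c" using Suc.prems by auto
  have "msum r c f (Suc k) $$ (i,j) = msum r c f k $$ (i,j) + f k $$ (i,j)"
    using carrier_matD[OF b] Suc.prems by simp
  thus ?case using Suc by simp
qed

lemma msum_cong: "(\<And>l. l < k \<Longrightarrow> f l = g l) \<Longrightarrow> msum r c f k = msum r c g k"
  by (induction k) auto

lemma msum_mult_right: assumes "\<And>l. l < k \<Longrightarrow> f l \<in> carrier_mat r c" "M \<in> carrier_mat c e"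
  shows "msum r c f k * M = msum r e (\<lambda>l. f l * M) k"
  using assms
proof (induction k)
  case 0 thus ?case by simp
next
  case (Suc k)
  have "msum r c f k \<in> carrier_mat r c" "f k \<in> carrier_mat r c" using Suc.prems by auto
  hence "msum r c f (Suc k) * M = msum r c f k * M + f k * M"
    using Suc.prems by (simp add: add_mult_distrib_mat[of _ r c])
  thus ?case using Suc by simp
qed

lemma msum_mult_left: assumes "\<And>l. l < k \<Longrightarrow> f l \<in> carrier_mat c e" "M \<in> carrier_mat r c"
  shows "M * msum c e f k = msum r e (\<lambda>l. M * f l) k"
  using assms
proof (induction k)
  case 0 thus ?case by simp
next
  case (Suc k)
  have a: "msum c e f k \<in> carrier_mat c e" and b: "f k \<in> carrier_mat c e" using Suc.prems by auto
  have "M * msum c e f (Suc k) = M * msum c e f k + M * f k"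
    using mult_add_distrib_mat[OF Suc.prems(2) a b] by simp
  thus ?case using Suc by simp
qed

lemma msum_adj: assumes "\<And>l. l < k \<Longrightarrow> f l \<in> carrier_mat r c"
  shows "adj (msum r c f k) = msum c r (\<lambda>l. adj (f l)) k"
  using assms
proof (induction k)
  case 0 thus ?case by simp
next
  case (Suc k)
  have "msum r c f k \<in> carrier_mat r c" "f k \<in> carrier_mat r c" using Suc.prems by auto
  thus ?case using Suc by (simp add: adj_add[of _ r c])
qed

lemma qf_add: "A \<in> carrier_mat N N \<Longrightarrow> B \<in> carrier_mat N N \<Longrightarrow> v \<in> carrier_vec N \<Longrightarrow>
  qf (A + B) v = qf A v + qf B v"
  unfolding qf_def by (auto simp: algebra_simps sum.distrib intro!: sum.cong)

lemma qf_minus: "A \<in> carrier_mat N N \<Longrightarrow> B \<in> carrier_mat N N \<Longrightarrow> v \<in> carrier_vec N \<Longrightarrow>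
  qf (A - B) v = qf A v - qf B v"
  unfolding qf_def by (auto simp: algebra_simps sum_subtractf intro!: sum.cong)

lemma qf_msum: "(\<And>l. l < k \<Longrightarrow> f l \<in> carrier_mat N N) \<Longrightarrow> v \<in> carrier_vec N \<Longrightarrow>
  qf (msum N N f k) v = (\<Sum>l<k. qf (f l) v)"
proof (induction k)
  case 0 thus ?case by (simp add: qf_def)
next
  case (Suc k)
  have a: "msum N N f k \<in> carrier_mat N N" and b: "f k \<in> carrier_mat N N" using Suc.prems by auto
  have "qf (msum N N f (Suc k)) v = qf (msum N N f k) v + qf (f k) v"
    using qf_add[OF a b Suc.prems(2)] by simp
  thus ?case using Suc by simp
qed

lemma qf_adjY_Y: assumes "Y \<in> carrier_mat r N" "v \<in> carrier_vec N"
  shows "qf (adj Y * Y) v = of_real ((vnorm (Y *\<^sub>v v))\<^sup>2)"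
proof -
  have "qf (adj Y * Y) v = ip v (adj Y *\<^sub>v (Y *\<^sub>v v))"
  proof -
    have "adj Y * Y \<in> carrier_mat N N" using assms by auto
    hence "qf (adj Y * Y) v = ip v ((adj Y * Y) *\<^sub>v v)" using assms by (simp add: qf_ip)
    also have "(adj Y * Y) *\<^sub>v v = adj Y *\<^sub>v (Y *\<^sub>v v)" using assms by (intro assoc_mult_mat_vec) auto
    finally show ?thesis .
  qed
  also have "\<dots> = ip (Y *\<^sub>v v) (Y *\<^sub>v v)" using assms by (simp add: ip_adj[of _ r N])
  finally show ?thesis by (simp add: ip_self)
qed

lemma qf_herm_real: assumes "hermitian M" "v \<in> carrier_vec N" "M \<in> carrier_mat N N"
  shows "qf M v = of_real (Re (qf M v))"
proof -
  have "cnj (qf M v) = (\<Sum>i<N. \<Sum>j<N. v$i * cnj (M$$(i,j)) * cnj (v$j))"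
    using assms unfolding qf_def by simp
  also have "\<dots> = (\<Sum>j<N. \<Sum>i<N. v$i * cnj (M$$(i,j)) * cnj (v$j))" by (rule sum.swap)
  also have "\<dots> = qf M v"
  proof -
    have "\<And>i j. i < N \<Longrightarrow> j < N \<Longrightarrow> cnj (M$$(i,j)) = M$$(j,i)"
      using assms unfolding hermitian_def by (metis carrier_matD index_adj)
    thus ?thesis using assms unfolding qf_def by (auto simp: mult_ac intro!: sum.cong)
  qed
  finally have "cnj (qf M v) = qf M v" .
  thus ?thesis by (metis Reals_cnj_iff complex_is_Real_iff of_real_Re)
qed

lemma vnorm_zero: "vnorm v = 0 \<Longrightarrow> i < dim_vec v \<Longrightarrow> v $ i = 0"
proof -
  assume a: "vnorm v = 0" "i < dim_vec v"
  hence "(\<Sum>i<dim_vec v. (cmod (v$i))\<^sup>2) = 0" using vnorm_sq[of v] by simp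
  hence "(cmod (v$i))\<^sup>2 = 0" using a by (subst (asm) sum_nonneg_eq_0_iff) auto
  thus ?thesis by simp
qed

lemma vnorm_smult: "vnorm (a \<cdot>\<^sub>v v) = cmod a * vnorm v"
proof -
  have "(vnorm (a \<cdot>\<^sub>v v))\<^sup>2 = (cmod a * vnorm v)\<^sup>2"
    unfolding vnorm_sq power_mult_distrib by (simp add: sum_distrib_left norm_mult power_mult_distrib)
  thus ?thesis using vnorm_nonneg by (metis norm_ge_zero power2_eq_iff_nonneg zero_le_mult_iff)
qed

lemma opnorm_unit: assumes A: "A \<in> carrier_mat r c" and v: "v \<in> carrier_vec c" and u: "vnorm v = 1"
  shows "vnorm (A *\<^sub>v v) \<le> opnorm A"
  unfolding opnorm_def
proof (rule cSup_upper)
  show "vnorm (A *\<^sub>v v) \<in> {vnorm (A *\<^sub>v v) |v. v \<in> carrier_vec (dim_col A) \<and> vnorm v = 1}"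
    using A v u by auto
  show "bdd_above {vnorm (A *\<^sub>v v) |v. v \<in> carrier_vec (dim_col A) \<and> vnorm v = 1}"
  proof (rule bdd_aboveI, clarify)
    fix w :: "complex vec" assume w: "w \<in> carrier_vec (dim_col A)" "vnorm w = 1"
    have wb: "cmod (w$j) \<le> 1" if "j < c" for j
    proof -
      have "(cmod (w$j))\<^sup>2 \<le> (\<Sum>i<dim_vec w. (cmod (w$i))\<^sup>2)"
        using that w A by (intro member_le_sum) auto
      also have "\<dots> = 1" using w vnorm_sq[of w] by simp
      finally show ?thesis by (simp add: power_le_one_iff abs_le_iff) 
    qed
    have "vnorm (A *\<^sub>v w) = L2_set (\<lambda>i. cmod ((A *\<^sub>v w)$i)) {..<r}"
      unfolding vnorm_def L2_set_def using A by simp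
    also have "\<dots> \<le> (\<Sum>i<r. cmod ((A *\<^sub>v w)$i))" by (rule L2_set_le_sum) auto
    also have "\<dots> \<le> (\<Sum>i<r. \<Sum>j<c. cmod (A$$(i,j)))"
    proof (rule sum_mono)
      fix i assume i: "i \<in> {..<r}"
      have "cmod ((A *\<^sub>v w)$i) = cmod (\<Sum>j<c. A$$(i,j) * w$j)"
        using mv_entry[OF A _, of w i] w(1) A i by simp
      also have "\<dots> \<le> (\<Sum>j<c. cmod (A$$(i,j)) * cmod (w$j))"
        by (rule order_trans[OF norm_sum]) (simp add: norm_mult)
      also have "\<dots> \<le> (\<Sum>j<c. cmod (A$$(i,j)))"
        by (rule sum_mono) (use wb in \<open>auto intro: mult_left_le\<close>)
      finally show "cmod ((A *\<^sub>v w)$i) \<le> (\<Sum>j<c. cmod (A$$(i,j)))" .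
    qed
    finally show "vnorm (A *\<^sub>v w) \<le> (\<Sum>i<r. \<Sum>j<c. cmod (A$$(i,j)))" .
  qed
qed

lemma opnorm_bound: assumes A: "A \<in> carrier_mat r c" and v: "v \<in> carrier_vec c"
  shows "vnorm (A *\<^sub>v v) \<le> opnorm A * vnorm v"
proof (cases "vnorm v = 0")
  case True
  hence "v = 0\<^sub>v c" using v vnorm_zero by (intro eq_vecI) auto
  hence "A *\<^sub>v v = 0\<^sub>v r" using A by auto
  hence "vnorm (A *\<^sub>v v) = 0" unfolding vnorm_def by simp
  thus ?thesis using True by simp
next
  case False
  hence pos: "vnorm v > 0" using vnorm_nonneg[of v] by simp
  define w where "w = complex_of_real (1 / vnorm v) \<cdot>\<^sub>v v"
  have w: "w \<in> carrier_vec c" "vnorm w = 1" unfolding w_def using v pos by (auto simp: vnorm_smult norm_divide)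
  have "A *\<^sub>v w = complex_of_real (1 / vnorm v) \<cdot>\<^sub>v (A *\<^sub>v v)"
    unfolding w_def using A v by (simp add: mult_mat_vec)
  hence "vnorm (A *\<^sub>v w) = vnorm (A *\<^sub>v v) / vnorm v" using pos by (simp add: vnorm_smult norm_divide)
  with opnorm_unit[OF A w] pos show ?thesis by (simp add: field_simps)
qed

lemma compact_cball_complex: "compact (cball (0::complex) r)"
proof -
  have "cball (0::complex) r = (\<lambda>p. Complex (fst p) (snd p)) ` cball (0::real\<times>real) r"
    apply (auto simp: norm_prod_def cmod_def image_iff)
    apply (rule_tac x="(Re x, Im x)" in bexI)
    apply (auto simp: norm_prod_def cmod_def dist_norm)
    done
  moreover have "compact ((\<lambda>p. Complex (fst p) (snd p)) ` cball (0::real\<times>real) r)"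
    by (intro compact_continuous_image continuous_intros compact_cball)
  ultimately show ?thesis by simp
qed

lemma cpt: "compact (PiE {..<N} (\<lambda>_. cball (0::complex) 1))"
proof -
  have e: "PiE {..<N} (\<lambda>_. cball (0::complex) 1) = PiE UNIV (\<lambda>i. if i < N then cball 0 1 else {undefined})"
    by (auto simp: PiE_def extensional_def Pi_def split: if_splits)
  have "compactin (product_topology (\<lambda>_. euclidean) UNIV) (PiE UNIV (\<lambda>i. if i < N then cball (0::complex) 1 else {undefined}))"
    by (subst compactin_PiE) (auto simp: compact_cball_complex)
  thus ?thesis unfolding e euclidean_product_topology by simp
qed

lemma cont_coord[continuous_intros]: "continuous_on S (\<lambda>x::nat\<Rightarrow>complex. x i)"
  by (rule continuous_on_subset[OF continuous_on_product_coordinates]) auto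

lemma ip_add_right: "x \<in> carrier_vec N \<Longrightarrow> y \<in> carrier_vec N \<Longrightarrow> z \<in> carrier_vec N \<Longrightarrow> ip x (y + z) = ip x y + ip x z"
  unfolding ip_def by (auto simp: algebra_simps sum.distrib)
lemma ip_add_left: "x \<in> carrier_vec N \<Longrightarrow> y \<in> carrier_vec N \<Longrightarrow> z \<in> carrier_vec N \<Longrightarrow> ip (x + y) z = ip x z + ip y z"
  unfolding ip_def by (auto simp: algebra_simps sum.distrib)
lemma ip_smult_right: "x \<in> carrier_vec N \<Longrightarrow> y \<in> carrier_vec N \<Longrightarrow> ip x (a \<cdot>\<^sub>v y) = a * ip x y"
  unfolding ip_def by (auto simp: algebra_simps sum_distrib_left)
lemma ip_smult_left: "x \<in> carrier_vec N \<Longrightarrow> y \<in> carrier_vec N \<Longrightarrow> ip (a \<cdot>\<^sub>v x) y = cnj a * ip x y"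
  unfolding ip_def by (auto simp: algebra_simps sum_distrib_left)

lemma qf_scale: assumes "M \<in> carrier_mat N N" "v \<in> carrier_vec N"
  shows "qf M (a \<cdot>\<^sub>v v) = of_real ((cmod a)\<^sup>2) * qf M v"
proof -
  have "qf M (a \<cdot>\<^sub>v v) = cnj a * (a * ip v (M *\<^sub>v v))"
    using assms by (simp add: qf_ip[of _ N] mult_mat_vec ip_smult_right[of _ N] ip_smult_left[of _ N])
  also have "\<dots> = (a * cnj a) * ip v (M *\<^sub>v v)" by (simp add: mult_ac)
  also have "a * cnj a = of_real ((cmod a)\<^sup>2)" by (metis complex_norm_square of_real_power)
  finally show ?thesis using assms by (simp add: qf_ip[of _ N])
qed

lemma qf_one: "v \<in> carrier_vec N \<Longrightarrow> qf (1\<^sub>m N) v = of_real ((vnorm v)\<^sup>2)"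
  by (simp add: qf_ip[of _ N] ip_self)

lemma qf_smult_mat: "M \<in> carrier_mat N N \<Longrightarrow> v \<in> carrier_vec N \<Longrightarrow> qf (a \<cdot>\<^sub>m M) v = a * qf M v"
  unfolding qf_def by (auto simp: sum_distrib_left mult_ac intro!: sum.cong)

lemma real_quad_lemma: fixes a c :: real
  assumes "\<And>t. 0 \<le> 2 * t * a + t\<^sup>2 * c" "a \<ge> 0" shows "a = 0"
proof (rule ccontr)
  assume "a \<noteq> 0" hence a: "a > 0" using assms by simp
  define e where "e = \<bar>c\<bar> + 1"
  define t where "t = - a / e"
  have d: "e > 0" unfolding e_def by simp
  have "t\<^sup>2 * c \<le> t\<^sup>2 * \<bar>c\<bar>" by (simp add: mult_left_mono)
  also have "\<dots> = a\<^sup>2 * \<bar>c\<bar> / e\<^sup>2" unfolding t_def by (simp add: power_divide)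
  also have "\<dots> \<le> a\<^sup>2 * e / e\<^sup>2"
    unfolding e_def by (intro divide_right_mono mult_left_mono) auto
  also have "\<dots> = a\<^sup>2 / e" using d by (simp add: power2_eq_square)
  finally have "0 \<le> 2 * t * a + a\<^sup>2 / e" using assms(1)[of t] by linarith
  also have "2 * t * a + a\<^sup>2 / e = - a\<^sup>2 / e"
    unfolding t_def using d by (simp add: field_simps power2_eq_square)
  finally show False using a d by (simp add: divide_nonneg_pos) (smt (verit) divide_pos_pos zero_less_power)
qed

lemma unit_entry: assumes "vnorm w = 1" "j < dim_vec w" shows "cmod (w$j) \<le> 1"
proof -
  have "(cmod (w$j))\<^sup>2 \<le> (\<Sum>i<dim_vec w. (cmod (w$i))\<^sup>2)"
    using assms by (intro member_le_sum) auto
  also have "\<dots> = 1" using assms vnorm_sq[of w] by simp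
  finally show ?thesis by (simp add: power_le_one_iff abs_le_iff)
qed

lemma vnorm_zero_vec[simp]: "vnorm (0\<^sub>v N) = 0" unfolding vnorm_def by simp

lemma qf_zero_vec[simp]: "qf M (0\<^sub>v N) = 0" unfolding qf_def by simp

lemma smult_one_mv: "v \<in> carrier_vec N \<Longrightarrow> ((c::complex) \<cdot>\<^sub>m 1\<^sub>m N) *\<^sub>v v = c \<cdot>\<^sub>v v"
  by auto

lemma exists_min_unit:
  assumes M: "M \<in> carrier_mat N N" and N: "0 < N"
  shows "\<exists>v0. v0 \<in> carrier_vec N \<and> vnorm v0 = 1 \<and>
     (\<forall>v. v \<in> carrier_vec N \<and> vnorm v = 1 \<longrightarrow> Re (qf M v0) \<le> Re (qf M v))"
proof -
  define g where "g f = Re (\<Sum>i<N. \<Sum>j<N. cnj (f i) * M$$(i,j) * f j)" for f :: "nat \<Rightarrow> complex"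
  define S where "S = PiE {..<N} (\<lambda>_. cball (0::complex) 1) \<inter> {f. (\<Sum>i<N. (cmod (f i))\<^sup>2) = 1}"
  have "closed {f::nat\<Rightarrow>complex. (\<Sum>i<N. (cmod (f i))\<^sup>2) = 1}"
    by (rule closed_Collect_eq) (intro continuous_intros)+
  hence cS: "compact S" unfolding S_def by (rule compact_Int_closed[OF cpt])
  define e0 where "e0 = (\<lambda>i::nat. if i < N then (if i = 0 then (1::complex) else 0) else undefined)"
  have "(\<Sum>i<N. (cmod (e0 i))\<^sup>2) = (\<Sum>i<N. if i = 0 then 1 else 0)"
    by (rule sum.cong) (auto simp: e0_def)
  also have "\<dots> = 1" using N by simp
  finally have "e0 \<in> S" unfolding S_def by (auto simp: e0_def PiE_def extensional_def)
  hence neS: "S \<noteq> {}" by auto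
  have cg: "continuous_on S g" unfolding g_def by (intro continuous_intros)
  obtain f0 where f0: "f0 \<in> S" and f0min: "\<And>f. f \<in> S \<Longrightarrow> g f0 \<le> g f"
    using continuous_attains_inf[OF cS neS cg] by blast
  define v0 where "v0 = vec N f0"
  have v0c: "v0 \<in> carrier_vec N" unfolding v0_def by simp
  have "(vnorm v0)\<^sup>2 = 1" unfolding vnorm_sq v0_def using f0 unfolding S_def by simp
  hence v0n: "vnorm v0 = 1" using vnorm_nonneg[of v0] by (simp add: power2_eq_1_iff) 
  have gv0: "Re (qf M v0) = g f0" unfolding qf_def g_def v0_def by simp
  have "Re (qf M v0) \<le> Re (qf M v)" if v: "v \<in> carrier_vec N" "vnorm v = 1" for v
  proof -
    define f where "f = (\<lambda>i. if i < N then v$i else undefined)"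
    have "f \<in> S" unfolding S_def f_def using v unit_entry[OF v(2)]
      using vnorm_sq[of v] by (auto simp: PiE_def extensional_def)
    hence "g f0 \<le> g f" by (rule f0min)
    moreover have "g f = Re (qf M v)" unfolding g_def f_def qf_def using v by simp
    ultimately show ?thesis using gv0 by simp
  qed
  thus ?thesis using v0c v0n by blast
qed

lemma rayleigh:
  assumes M: "M \<in> carrier_mat N N" and N: "0 < N" and H: "hermitian M"
  shows "\<forall>v\<in>carrier_vec N. vnorm v = 1 \<longrightarrow> lambda_min M \<le> Re (qf M v)"
    and "\<exists>v\<in>carrier_vec N. vnorm v = 1 \<and> Re (qf M v) = lambda_min M"
proof -
  obtain v0 where v0c: "v0 \<in> carrier_vec N" and v0n: "vnorm v0 = 1"
    and v0min: "\<And>v. v \<in> carrier_vec N \<Longrightarrow> vnorm v = 1 \<Longrightarrow> Re (qf M v0) \<le> Re (qf M v)"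
    using exists_min_unit[OF M N] by blast
  define \<mu> where "\<mu> = Re (qf M v0)"
  have gen: "\<mu> * (vnorm w)\<^sup>2 \<le> Re (qf M w)" if w: "w \<in> carrier_vec N" for w
  proof (cases "vnorm w = 0")
    case True
    hence "w = 0\<^sub>v N" using w vnorm_zero by (intro eq_vecI) auto
    thus ?thesis using True by simp
  next
    case False
    hence pos: "vnorm w > 0" using vnorm_nonneg[of w] by simp
    define u where "u = complex_of_real (1 / vnorm w) \<cdot>\<^sub>v w"
    have u: "u \<in> carrier_vec N" "vnorm u = 1" unfolding u_def using w pos by (auto simp: vnorm_smult norm_divide)
    have "qf M u = of_real ((1 / vnorm w)\<^sup>2) * qf M w"
      unfolding u_def using qf_scale[OF M w] vnorm_nonneg[of w] by (simp add: norm_divide)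
    hence "Re (qf M u) = Re (qf M w) / (vnorm w)\<^sup>2" by (simp add: power_divide)
    with v0min[OF u] have "\<mu> \<le> Re (qf M w) / (vnorm w)\<^sup>2" unfolding \<mu>_def by simp
    thus ?thesis using pos by (simp add: field_simps)
  qed
  define N' where "N' = M - complex_of_real \<mu> \<cdot>\<^sub>m 1\<^sub>m N"
  have N'c: "N' \<in> carrier_mat N N" unfolding N'_def using M by auto
  have adjN': "adj N' = N'" unfolding N'_def using M H
    by (simp add: adj_minus[of _ N N] adj_smult hermitian_def)
  have qfN': "qf N' w = qf M w - of_real (\<mu> * (vnorm w)\<^sup>2)" if "w \<in> carrier_vec N" for w
    unfolding N'_def using that M by (simp add: qf_minus[of _ N] qf_smult_mat[OF one_carrier_mat that] qf_one)
  have HN': "hermitian N'" unfolding hermitian_def using adjN' N'c by auto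
  have q0: "qf N' v0 = 0"
  proof -
    have "Re (qf N' v0) = 0" using qfN'[OF v0c] v0n unfolding \<mu>_def by simp
    thus ?thesis using qf_herm_real[OF HN' v0c N'c] by simp
  qed
  define z where "z = N' *\<^sub>v v0"
  have zc: "z \<in> carrier_vec N" unfolding z_def using mult_mat_vec_carrier[OF N'c v0c] .
  have "vnorm z = 0"
  proof -
    define a where "a = (vnorm z)\<^sup>2"
    define c where "c = Re (qf N' z)"
    have "0 \<le> 2 * t * a + t\<^sup>2 * c" for t
    proof -
      define w where "w = v0 + complex_of_real t \<cdot>\<^sub>v z"
      have wc: "w \<in> carrier_vec N" unfolding w_def using v0c zc by auto
      have "0 \<le> Re (qf N' w)" using qfN'[OF wc] gen[OF wc] by simp
      also have "qf N' w = ip w (N' *\<^sub>v w)" using qf_ip[OF N'c wc] .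
      also have "N' *\<^sub>v w = z + complex_of_real t \<cdot>\<^sub>v (N' *\<^sub>v z)"
        unfolding w_def z_def using N'c v0c zc
        by (simp add: mult_add_distrib_mat_vec[of _ N N] mult_mat_vec[of _ N N])
      also have "ip w (z + complex_of_real t \<cdot>\<^sub>v (N' *\<^sub>v z)) =
          ip v0 z + of_real t * ip v0 (N' *\<^sub>v z) + of_real t * ip z z + of_real t * of_real t * ip z (N' *\<^sub>v z)"
        unfolding w_def using v0c zc N'c
        by (simp add: ip_add_left[of _ N] ip_add_right[of _ N] ip_smult_left[of _ N] ip_smult_right[of _ N] algebra_simps)
      also have "ip v0 z = 0" unfolding z_def using q0 qf_ip[OF N'c v0c] by simp
      also have "ip v0 (N' *\<^sub>v z) = ip z z"
        using ip_adj[OF N'c v0c zc] adjN' unfolding z_def by simp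
      also have "ip z (N' *\<^sub>v z) = qf N' z" using qf_ip[OF N'c zc] by simp
      finally show ?thesis unfolding a_def c_def by (simp add: ip_self power2_eq_square)
    qed
    hence "a = 0" using real_quad_lemma[of a c] unfolding a_def by simp
    thus ?thesis unfolding a_def by simp
  qed
  hence z0: "z = 0\<^sub>v N" using zc vnorm_zero by (intro eq_vecI) auto
  have Mv0: "M *\<^sub>v v0 = complex_of_real \<mu> \<cdot>\<^sub>v v0"
  proof -
    have "N' *\<^sub>v v0 = M *\<^sub>v v0 - complex_of_real \<mu> \<cdot>\<^sub>v v0"
      unfolding N'_def using M v0c by (simp add: minus_mult_distrib_mat_vec[of _ N N] smult_one_mv)
    with z0 z_def have "M *\<^sub>v v0 - complex_of_real \<mu> \<cdot>\<^sub>v v0 = 0\<^sub>v N" by simp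
    hence "M *\<^sub>v v0 - complex_of_real \<mu> \<cdot>\<^sub>v v0 + complex_of_real \<mu> \<cdot>\<^sub>v v0 = complex_of_real \<mu> \<cdot>\<^sub>v v0"
      using v0c by simp
    moreover have "M *\<^sub>v v0 - complex_of_real \<mu> \<cdot>\<^sub>v v0 + complex_of_real \<mu> \<cdot>\<^sub>v v0 = M *\<^sub>v v0"
      using M v0c by (intro eq_vecI) auto
    ultimately show ?thesis by simp
  qed
  have v0ne: "v0 \<noteq> 0\<^sub>v N" using v0n by auto
  have eig: "eigenvalue M (complex_of_real \<mu>)"
    unfolding eigenvalue_def eigenvector_def using M v0c v0ne Mv0 by auto
  define E where "E = {Re k | k. eigenvalue M k}"
  have finE: "finite E"
  proof -
    have "{k. eigenvalue M k} \<subseteq> {k. poly (char_poly M) k = 0}" using eigenvalue_root_char_poly[OF M] by auto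
    moreover have "char_poly M \<noteq> 0" using degree_monic_char_poly[OF M] N by (metis coeff_0 zero_neq_one)
    ultimately have "finite {k. eigenvalue M k}" using finite_subset[OF _ poly_roots_finite[of "char_poly M"]] by blast
    thus ?thesis unfolding E_def by (simp add: setcompr_eq_image)
  qed
  have muE: "\<mu> \<in> E" unfolding E_def using eig by force
  have lowE: "\<mu> \<le> e" if eE: "e \<in> E" for e
  proof -
    obtain k where k: "eigenvalue M k" "e = Re k" using eE unfolding E_def by auto
    then obtain u where u: "u \<in> carrier_vec N" "u \<noteq> 0\<^sub>v N" "M *\<^sub>v u = k \<cdot>\<^sub>v u"
      unfolding eigenvalue_def eigenvector_def using M by auto
    have "vnorm u \<noteq> 0"
    proof
      assume "vnorm u = 0"
      hence "u = 0\<^sub>v N" using u(1) vnorm_zero by (intro eq_vecI) auto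
      thus False using u(2) by simp
    qed
    hence pos: "(vnorm u)\<^sup>2 > 0" using vnorm_nonneg[of u] by simp
    have "qf M u = k * of_real ((vnorm u)\<^sup>2)"
      using qf_ip[OF M u(1)] u ip_smult_right[of u N u k] by (simp add: ip_self)
    hence "Re (qf M u) = Re k * (vnorm u)\<^sup>2" by simp
    with gen[OF u(1)] have "\<mu> * (vnorm u)\<^sup>2 \<le> Re k * (vnorm u)\<^sup>2" by simp
    thus ?thesis using pos k by simp
  qed
  have lm: "lambda_min M = \<mu>"
    unfolding lambda_min_def E_def[symmetric] by (rule Min_eqI[OF finE lowE muE])
  show "\<forall>v\<in>carrier_vec N. vnorm v = 1 \<longrightarrow> lambda_min M \<le> Re (qf M v)"
    using v0min lm unfolding \<mu>_def by simp
  show "\<exists>v\<in>carrier_vec N. vnorm v = 1 \<and> Re (qf M v) = lambda_min M"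
    using v0c v0n lm unfolding \<mu>_def by (intro bexI[of _ v0]) auto
qed

lemma sum_prod_idx: fixes g :: "nat \<Rightarrow> 'a::comm_monoid_add"
  shows "(\<Sum>k<p*q. g k) = (\<Sum>a<p. \<Sum>b<q. g (a*q+b))"
proof -
  have "(\<Sum>k<p*q. g k) = (\<Sum>a<p. sum g {a*q..<a*q+q})" using sum.nat_group[of g q p] by simp
  also have "\<dots> = (\<Sum>a<p. \<Sum>b<q. g (a*q+b))"
  proof (rule sum.cong[OF refl])
    fix a
    have "sum g {0 + a*q..<q + a*q} = (\<Sum>b = 0..<q. g (b + a*q))" by (rule sum.shift_bounds_nat_ivl)
    thus "sum g {a*q..<a*q+q} = (\<Sum>b<q. g (a*q+b))" by (simp add: add.commute atLeast0LessThan)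
  qed
  finally show ?thesis .
qed

lemma idx_lt: fixes a b p q :: nat assumes "a < p" "b < q" shows "a*q+b < p*q"
proof -
  have "a*q+b < (a+1)*q" using assms by simp
  also have "(a+1)*q \<le> p*q" using assms by (intro mult_le_mono1) simp
  finally show ?thesis .
qed

lemma dm_bounds: fixes i a b :: nat assumes "i < a*b" shows "i div b < a" "i mod b < b"
proof -
  have "b > 0" using assms by (auto intro: gr0I)
  thus "i mod b < b" by simp
  show "i div b < a" using assms by (simp add: less_mult_imp_div_less)
qed

lemma kron_dims[simp]: "dim_row (kron A B) = dim_row A * dim_row B" "dim_col (kron A B) = dim_col A * dim_col B"
  unfolding kron_def by auto

lemma kron_carrier[simp,intro]: "A \<in> carrier_mat ra ca \<Longrightarrow> B \<in> carrier_mat rb cb \<Longrightarrow> kron A B \<in> carrier_mat (ra*rb) (ca*cb)"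
  unfolding kron_def by auto

lemma index_kron: "i < dim_row A * dim_row B \<Longrightarrow> j < dim_col A * dim_col B \<Longrightarrow>
  kron A B $$ (i,j) = A $$ (i div dim_row B, j div dim_col B) * B $$ (i mod dim_row B, j mod dim_col B)"
  unfolding kron_def by auto

lemma index_kron': "A \<in> carrier_mat ra ca \<Longrightarrow> B \<in> carrier_mat rb cb \<Longrightarrow> a < ra \<Longrightarrow> b < rb \<Longrightarrow> a' < ca \<Longrightarrow> b' < cb \<Longrightarrow>
  kron A B $$ (a*rb+b, a'*cb+b') = A $$ (a,a') * B $$ (b,b')"
proof -
  assume A: "A \<in> carrier_mat ra ca" and B: "B \<in> carrier_mat rb cb" and h: "a < ra" "b < rb" "a' < ca" "b' < cb"
  have "a*rb+b < ra*rb" using idx_lt h by simp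
  moreover have "a'*cb+b' < ca*cb" using idx_lt h by simp
  ultimately show ?thesis using A B h by (simp add: index_kron)
qed

lemma kron_mult: assumes A: "A \<in> carrier_mat ra ca" and B: "B \<in> carrier_mat rb cb"
  and C: "C \<in> carrier_mat ca cc" and D: "D \<in> carrier_mat cb cd"
  shows "kron A B * kron C D = kron (A * C) (B * D)"
proof (rule eq_matI)
  fix i j assume i: "i < dim_row (kron (A*C) (B*D))" and j: "j < dim_col (kron (A*C) (B*D))"
  hence i': "i < ra*rb" and j': "j < cc*cd" using A B C D by auto
  hence rb: "rb > 0" and cd: "cd > 0" by (auto intro: gr0I)
  have i1: "i div rb < ra" using i' by (simp add: less_mult_imp_div_less)
  have j1: "j div cd < cc" using j' by (simp add: less_mult_imp_div_less)
  have i2: "i mod rb < rb" using rb by simp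
  have j2: "j mod cd < cd" using cd by simp
  have "(kron A B * kron C D) $$ (i,j) = (\<Sum>k<ca*cb. kron A B $$ (i,k) * kron C D $$ (k,j))"
    by (rule mm_entry[of _ "ra*rb" "ca*cb" _ "cc*cd"]) (use A B C D i' j' in auto)
  also have "\<dots> = (\<Sum>a<ca. \<Sum>b<cb. kron A B $$ (i,a*cb+b) * kron C D $$ (a*cb+b,j))"
    by (rule sum_prod_idx)
  also have "\<dots> = (\<Sum>a<ca. \<Sum>b<cb. (A $$ (i div rb, a) * C $$ (a, j div cd)) * (B $$ (i mod rb, b) * D $$ (b, j mod cd)))"
  proof (intro sum.cong refl)
    fix a b assume a: "a \<in> {..<ca}" and b: "b \<in> {..<cb}"
    have bb: "b mod cb = b" using b by simp
    have k: "a*cb+b < ca*cb" using a b idx_lt by simp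
    have dm: "(a*cb+b) div cb = a" "(a*cb+b) mod cb = b" using b by auto
    show "kron A B $$ (i,a*cb+b) * kron C D $$ (a*cb+b,j) = (A $$ (i div rb, a) * C $$ (a, j div cd)) * (B $$ (i mod rb, b) * D $$ (b, j mod cd))"
      using A B C D i' j' k by (simp add: index_kron dm bb)
  qed
  also have "\<dots> = (\<Sum>a<ca. A $$ (i div rb, a) * C $$ (a, j div cd)) * (\<Sum>b<cb. B $$ (i mod rb, b) * D $$ (b, j mod cd))"
    by (simp add: sum_product)
  also have "\<dots> = (A*C) $$ (i div rb, j div cd) * (B*D) $$ (i mod rb, j mod cd)"
    by (subst mm_entry[OF A C i1 j1], subst mm_entry[OF B D i2 j2]) (rule refl)
  also have "\<dots> = kron (A * C) (B * D) $$ (i,j)"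
    using A B C D i' j' by (simp add: index_kron)
  finally show "(kron A B * kron C D) $$ (i,j) = kron (A * C) (B * D) $$ (i,j)" .
qed (use A B C D in auto)

lemma kron_adj: "adj (kron A B) = kron (adj A) (adj B)"
proof (rule eq_matI)
  fix i j assume i: "i < dim_row (kron (adj A) (adj B))" and j: "j < dim_col (kron (adj A) (adj B))"
  hence i': "i < dim_col A * dim_col B" and j': "j < dim_row A * dim_row B" by auto
  hence "dim_col B > 0" "dim_row B > 0" by (auto intro: gr0I)
  thus "adj (kron A B) $$ (i,j) = kron (adj A) (adj B) $$ (i,j)"
    using i' j' by (simp add: index_kron less_mult_imp_div_less)
qed auto

lemma kron_add_left: assumes "A \<in> carrier_mat ra ca" "A' \<in> carrier_mat ra ca"
  shows "kron (A + A') B = kron A B + kron A' B"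
proof (rule eq_matI)
  fix i j assume "i < dim_row (kron A B + kron A' B)" "j < dim_col (kron A B + kron A' B)"
  hence i: "i < ra * dim_row B" and j: "j < ca * dim_col B" using assms by auto
  show "kron (A + A') B $$ (i,j) = (kron A B + kron A' B) $$ (i,j)"
    using assms i j dm_bounds[OF i] dm_bounds[OF j] by (simp add: index_kron algebra_simps)
qed (use assms in auto)

lemma kron_minus_left: assumes "A \<in> carrier_mat ra ca" "A' \<in> carrier_mat ra ca"
  shows "kron (A - A') B = kron A B - kron A' B"
proof (rule eq_matI)
  fix i j assume "i < dim_row (kron A B - kron A' B)" "j < dim_col (kron A B - kron A' B)"
  hence i: "i < ra * dim_row B" and j: "j < ca * dim_col B" using assms by auto
  show "kron (A - A') B $$ (i,j) = (kron A B - kron A' B) $$ (i,j)"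
    using assms i j dm_bounds[OF i] dm_bounds[OF j] by (simp add: index_kron algebra_simps)
qed (use assms in auto)

lemma kron_add_right: assumes "B \<in> carrier_mat rb cb" "B' \<in> carrier_mat rb cb"
  shows "kron A (B + B') = kron A B + kron A B'"
proof (rule eq_matI)
  fix i j assume "i < dim_row (kron A B + kron A B')" "j < dim_col (kron A B + kron A B')"
  hence i: "i < dim_row A * rb" and j: "j < dim_col A * cb" using assms by auto
  show "kron A (B + B') $$ (i,j) = (kron A B + kron A B') $$ (i,j)"
    using assms i j dm_bounds[OF i] dm_bounds[OF j] by (simp add: index_kron algebra_simps)
qed (use assms in auto)

lemma kron_minus_right: assumes "B \<in> carrier_mat rb cb" "B' \<in> carrier_mat rb cb"
  shows "kron A (B - B') = kron A B - kron A B'"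
proof (rule eq_matI)
  fix i j assume "i < dim_row (kron A B - kron A B')" "j < dim_col (kron A B - kron A B')"
  hence i: "i < dim_row A * rb" and j: "j < dim_col A * cb" using assms by auto
  show "kron A (B - B') $$ (i,j) = (kron A B - kron A B') $$ (i,j)"
    using assms i j dm_bounds[OF i] dm_bounds[OF j] by (simp add: index_kron algebra_simps)
qed (use assms in auto)

lemma kron_zero_right: "kron A (0\<^sub>m rb cb) = 0\<^sub>m (dim_row A * rb) (dim_col A * cb)"
proof (rule eq_matI)
  fix i j assume "i < dim_row (0\<^sub>m (dim_row A * rb) (dim_col A * cb))" "j < dim_col (0\<^sub>m (dim_row A * rb) (dim_col A * cb))"
  hence i: "i < dim_row A * rb" and j: "j < dim_col A * cb" by auto
  show "kron A (0\<^sub>m rb cb) $$ (i,j) = 0\<^sub>m (dim_row A * rb) (dim_col A * cb) $$ (i,j)"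
    using i j dm_bounds[OF i] dm_bounds[OF j] by (simp add: index_kron)
qed auto

lemma kron_one_one: "kron (1\<^sub>m a) (1\<^sub>m b) = 1\<^sub>m (a*b)"
proof (rule eq_matI)
  fix i j assume "i < dim_row (1\<^sub>m (a*b))" "j < dim_col (1\<^sub>m (a*b))"
  hence ij: "i < a*b" "j < a*b" by auto
  hence "b > 0" by (auto intro: gr0I)
  have "(i div b = j div b \<and> i mod b = j mod b) = (i = j)" by (metis div_mult_mod_eq)
  thus "kron (1\<^sub>m a) (1\<^sub>m b) $$ (i,j) = 1\<^sub>m (a*b) $$ (i,j)"
    using ij \<open>b > 0\<close> by (auto simp: index_kron less_mult_imp_div_less)
qed auto

lemma kron_msum_left: assumes "\<And>l. l < k \<Longrightarrow> f l \<in> carrier_mat r c" "B \<in> carrier_mat rb cb"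
  shows "kron (msum r c f k) B = msum (r*rb) (c*cb) (\<lambda>l. kron (f l) B) k"
  using assms
proof (induction k)
  case 0
  show ?case
  proof (rule eq_matI)
    fix i j assume "i < dim_row (msum (r*rb) (c*cb) (\<lambda>l. kron (f l) B) 0)" "j < dim_col (msum (r*rb) (c*cb) (\<lambda>l. kron (f l) B) 0)"
    hence i: "i < r * rb" and j: "j < c * cb" by auto
    show "kron (msum r c f 0) B $$ (i,j) = msum (r*rb) (c*cb) (\<lambda>l. kron (f l) B) 0 $$ (i,j)"
      using 0 i j dm_bounds[OF i] dm_bounds[OF j] by (simp add: index_kron)
  qed (use 0 in auto)
next
  case (Suc k)
  have a: "msum r c f k \<in> carrier_mat r c" and b: "f k \<in> carrier_mat r c" using Suc.prems by auto
  have "kron (msum r c f (Suc k)) B = kron (msum r c f k) B + kron (f k) B"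
    using kron_add_left[OF a b] by simp
  thus ?case using Suc by simp
qed

definition blk :: "nat \<Rightarrow> nat \<Rightarrow> nat \<Rightarrow> complex vec \<Rightarrow> complex vec" where
  "blk n s b v = vec n (\<lambda>a. v $ (a*s+b))"

lemma blk_carrier[simp]: "blk n s b v \<in> carrier_vec n" unfolding blk_def by simp
lemma blk_dim[simp]: "dim_vec (blk n s b v) = n" unfolding blk_def by simp

lemma blk_norm: assumes "v \<in> carrier_vec (n*s)"
  shows "(\<Sum>b<s. (vnorm (blk n s b v))\<^sup>2) = (vnorm v)\<^sup>2"
proof -
  have "(vnorm v)\<^sup>2 = (\<Sum>a<n. \<Sum>b<s. (cmod (v$(a*s+b)))\<^sup>2)"
    unfolding vnorm_sq using assms sum_prod_idx by simp
  also have "\<dots> = (\<Sum>b<s. \<Sum>a<n. (cmod (v$(a*s+b)))\<^sup>2)" by (rule sum.swap)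
  also have "\<dots> = (\<Sum>b<s. (vnorm (blk n s b v))\<^sup>2)" unfolding vnorm_sq blk_def by simp
  finally show ?thesis by simp
qed

lemma qf_kron_diag: assumes X: "X \<in> carrier_mat n n" and Y: "Y \<in> carrier_mat s s"
  and diag: "\<And>b b'. b < s \<Longrightarrow> b' < s \<Longrightarrow> b \<noteq> b' \<Longrightarrow> Y $$ (b,b') = 0"
  and v: "v \<in> carrier_vec (n*s)"
  shows "qf (kron X Y) v = (\<Sum>b<s. Y $$ (b,b) * qf X (blk n s b v))"
proof -
  have "qf (kron X Y) v = (\<Sum>p<n*s. \<Sum>q<n*s. cnj (v$p) * kron X Y $$ (p,q) * v$q)"
    unfolding qf_def using v by simp
  also have "\<dots> = (\<Sum>a<n. \<Sum>b<s. \<Sum>a'<n. \<Sum>b'<s. cnj (v$(a*s+b)) * (X $$ (a,a') * Y $$ (b,b')) * v$(a'*s+b'))"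
    by (simp add: sum_prod_idx index_kron'[OF X Y])
  also have "\<dots> = (\<Sum>a<n. \<Sum>b<s. \<Sum>a'<n. cnj (v$(a*s+b)) * (X $$ (a,a') * Y $$ (b,b)) * v$(a'*s+b))"
  proof (intro sum.cong refl)
    fix a b a' assume b: "b \<in> {..<s}"
    have "(\<Sum>b'<s. cnj (v$(a*s+b)) * (X $$ (a,a') * Y $$ (b,b')) * v$(a'*s+b')) =
          (\<Sum>b'<s. if b' = b then cnj (v$(a*s+b)) * (X $$ (a,a') * Y $$ (b,b)) * v$(a'*s+b) else 0)"
      by (rule sum.cong) (use diag b in auto)
    also have "\<dots> = cnj (v$(a*s+b)) * (X $$ (a,a') * Y $$ (b,b)) * v$(a'*s+b)" using b by simp
    finally show "(\<Sum>b'<s. cnj (v$(a*s+b)) * (X $$ (a,a') * Y $$ (b,b')) * v$(a'*s+b')) =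
          cnj (v$(a*s+b)) * (X $$ (a,a') * Y $$ (b,b)) * v$(a'*s+b)" .
  qed
  also have "\<dots> = (\<Sum>b<s. \<Sum>a<n. \<Sum>a'<n. cnj (v$(a*s+b)) * (X $$ (a,a') * Y $$ (b,b)) * v$(a'*s+b))"
    by (rule sum.swap)
  also have "\<dots> = (\<Sum>b<s. Y $$ (b,b) * qf X (blk n s b v))"
    unfolding qf_def blk_def by (simp add: sum_distrib_left mult_ac)
  finally show ?thesis .
qed

lemma kron_uminus_right: "kron A (- B) = - kron A B"
proof (rule eq_matI)
  fix i j assume "i < dim_row (- kron A B)" "j < dim_col (- kron A B)"
  hence i: "i < dim_row A * dim_row B" and j: "j < dim_col A * dim_col B" by auto
  show "kron A (- B) $$ (i,j) = (- kron A B) $$ (i,j)"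
    using i j dm_bounds[OF i] dm_bounds[OF j] by (simp add: index_kron)
qed auto

lemma qf_uminus: "M \<in> carrier_mat N N \<Longrightarrow> v \<in> carrier_vec N \<Longrightarrow> qf (- M) v = - qf M v"
  unfolding qf_def by (auto simp: sum_negf[symmetric] intro!: sum.cong)

lemma qf_zero_mat: "v \<in> carrier_vec N \<Longrightarrow> qf (0\<^sub>m N N) v = 0"
  unfolding qf_def by auto

lemma shift_prod: fixes A B :: "complex mat" assumes A: "A \<in> carrier_mat n n" and B: "B \<in> carrier_mat n n"
  shows "(A - a \<cdot>\<^sub>m 1\<^sub>m n) * (B - b \<cdot>\<^sub>m 1\<^sub>m n) = (A * B - a \<cdot>\<^sub>m B) - b \<cdot>\<^sub>m (A - a \<cdot>\<^sub>m 1\<^sub>m n)"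
proof -
  have c1: "A - a \<cdot>\<^sub>m 1\<^sub>m n \<in> carrier_mat n n" using A by auto
  have "(A - a \<cdot>\<^sub>m 1\<^sub>m n) * (B - b \<cdot>\<^sub>m 1\<^sub>m n) = (A - a \<cdot>\<^sub>m 1\<^sub>m n) * B - (A - a \<cdot>\<^sub>m 1\<^sub>m n) * (b \<cdot>\<^sub>m 1\<^sub>m n)"
    using mult_minus_distrib_mat[OF c1 B, of "b \<cdot>\<^sub>m 1\<^sub>m n"] by simp
  also have "(A - a \<cdot>\<^sub>m 1\<^sub>m n) * B = A * B - (a \<cdot>\<^sub>m 1\<^sub>m n) * B"
    using minus_mult_distrib_mat[OF A _ B, of "a \<cdot>\<^sub>m 1\<^sub>m n"] by simp
  also have "(a \<cdot>\<^sub>m 1\<^sub>m n) * B = a \<cdot>\<^sub>m B"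
    using mult_smult_assoc_mat[OF one_carrier_mat B] B by simp
  also have "(A - a \<cdot>\<^sub>m 1\<^sub>m n) * (b \<cdot>\<^sub>m 1\<^sub>m n) = b \<cdot>\<^sub>m (A - a \<cdot>\<^sub>m 1\<^sub>m n)"
    using mult_smult_distrib[OF c1 one_carrier_mat] c1 by simp
  finally show ?thesis .
qed

lemma shift_comm: fixes A B :: "complex mat" assumes A: "A \<in> carrier_mat n n" and B: "B \<in> carrier_mat n n"
  shows "(A - a \<cdot>\<^sub>m 1\<^sub>m n) * (B - b \<cdot>\<^sub>m 1\<^sub>m n) - (B - b \<cdot>\<^sub>m 1\<^sub>m n) * (A - a \<cdot>\<^sub>m 1\<^sub>m n) = A * B - B * A"
  unfolding shift_prod[OF A B] shift_prod[OF B A]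
  using A B by (intro eq_matI) (auto simp: algebra_simps)

lemma double_sum_split: fixes y :: "nat \<Rightarrow> nat \<Rightarrow> 'a::comm_monoid_add"
  shows "(\<Sum>i<d. \<Sum>j<d. y i j) = (\<Sum>i<d. y i i) + (\<Sum>i<d. \<Sum>j\<in>{i<..<d}. y i j + y j i)"
proof (induction d)
  case 0 thus ?case by simp
next
  case (Suc d)
  have e: "(\<Sum>i<d. \<Sum>j\<in>{i<..<Suc d}. y i j + y j i) = (\<Sum>i<d. (\<Sum>j\<in>{i<..<d}. y i j + y j i) + (y i d + y d i))"
  proof (rule sum.cong[OF refl])
    fix i assume "i \<in> {..<d}"
    hence "{i<..<Suc d} = insert d {i<..<d}" by auto
    thus "(\<Sum>j\<in>{i<..<Suc d}. y i j + y j i) = (\<Sum>j\<in>{i<..<d}. y i j + y j i) + (y i d + y d i)"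
      by (simp add: add.commute)
  qed
  have emp: "{d<..<Suc d} = {}" by auto
  have "(\<Sum>i<Suc d. \<Sum>j<Suc d. y i j) = (\<Sum>i<d. \<Sum>j<d. y i j) + (\<Sum>i<d. y i d) + (\<Sum>j<d. y d j) + y d d"
    by (simp add: sum.distrib add_ac)
  also have "\<dots> = (\<Sum>i<d. y i i) + (\<Sum>i<d. \<Sum>j\<in>{i<..<d}. y i j + y j i) + (\<Sum>i<d. y i d) + (\<Sum>j<d. y d j) + y d d"
    using Suc by simp
  also have "\<dots> = (\<Sum>i<Suc d. y i i) + (\<Sum>i<Suc d. \<Sum>j\<in>{i<..<Suc d}. y i j + y j i)"
    using e emp by (simp add: sum.distrib add_ac)
  finally show ?case .
qed

lemma sqrt_diff_le: fixes a b c :: real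
  assumes "a \<ge> 0" "b \<ge> 0" "\<bar>a - b\<bar> \<le> c"
  shows "\<bar>sqrt a - sqrt b\<bar> \<le> sqrt c"
proof -
  have key: "sqrt x - sqrt y \<le> sqrt (x - y)" if "0 \<le> y" "y \<le> x" for x y :: real
  proof -
    have "sqrt (y + (x - y)) \<le> sqrt y + sqrt (x - y)"
      by (rule sqrt_add_le_add_sqrt) (use that in auto)
    thus ?thesis by simp
  qed
  have "\<bar>sqrt a - sqrt b\<bar> \<le> sqrt \<bar>a - b\<bar>"
  proof (cases "b \<le> a")
    case True
    have "sqrt b \<le> sqrt a" using True by simp
    moreover have "sqrt a - sqrt b \<le> sqrt (a - b)" by (rule key[OF assms(2) True])
    moreover have "sqrt \<bar>a - b\<bar> = sqrt (a - b)" using True by simp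
    ultimately show ?thesis by linarith
  next
    case False
    hence F: "a \<le> b" by simp
    have "sqrt a \<le> sqrt b" using F by simp
    moreover have "sqrt b - sqrt a \<le> sqrt (b - a)" by (rule key[OF assms(1) F])
    moreover have "sqrt \<bar>a - b\<bar> = sqrt (b - a)" using F by simp
    ultimately show ?thesis by linarith
  qed
  also have "\<dots> \<le> sqrt c" using assms(3) by simp
  finally show ?thesis .
qed

lemma rayleigh_gen:
  assumes M: "M \<in> carrier_mat N N" and N: "0 < N" and H: "hermitian M" and w: "w \<in> carrier_vec N"
  shows "lambda_min M * (vnorm w)\<^sup>2 \<le> Re (qf M w)"
proof (cases "vnorm w = 0")
  case True
  hence "w = 0\<^sub>v N" using w vnorm_zero by (intro eq_vecI) auto
  thus ?thesis using True by simp
next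
  case False
  hence pos: "vnorm w > 0" using vnorm_nonneg[of w] by simp
  define u where "u = complex_of_real (1 / vnorm w) \<cdot>\<^sub>v w"
  have u: "u \<in> carrier_vec N" "vnorm u = 1" unfolding u_def using w pos by (auto simp: vnorm_smult norm_divide)
  have "qf M u = of_real ((1 / vnorm w)\<^sup>2) * qf M w"
    unfolding u_def using qf_scale[OF M w] vnorm_nonneg[of w] by (simp add: norm_divide)
  hence "Re (qf M u) = Re (qf M w) / (vnorm w)\<^sup>2" by (simp add: power_divide)
  moreover have "lambda_min M \<le> Re (qf M u)" using rayleigh(1)[OF M N H] u by blast
  ultimately have "lambda_min M \<le> Re (qf M w) / (vnorm w)\<^sup>2" by simp
  thus ?thesis using pos by (simp add: field_simps)
qed

lemma opnorm_nonneg: assumes "C \<in> carrier_mat n n" "0 < n" shows "opnorm C \<ge> 0"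
proof -
  define e where "e = vec n (\<lambda>i. if i = 0 then (1::complex) else 0)"
  have "(vnorm e)\<^sup>2 = (\<Sum>i<n. if i = 0 then 1 else 0)" unfolding vnorm_sq e_def by (intro sum.cong) auto
  also have "\<dots> = 1" using assms by simp
  finally have "vnorm e = 1" using vnorm_nonneg[of e] by (simp add: power2_eq_1_iff)
  hence "vnorm (C *\<^sub>v e) \<le> opnorm C" using opnorm_unit[OF assms(1)] unfolding e_def by simp
  thus ?thesis using vnorm_nonneg[of "C *\<^sub>v e"] by simp
qed

lemma qf_bound: assumes F: "F \<in> carrier_mat N N" and v: "v \<in> carrier_vec N"
  shows "cmod (qf F v) \<le> opnorm F * (vnorm v)\<^sup>2"
proof -
  have "cmod (qf F v) = cmod (ip v (F *\<^sub>v v))" using qf_ip[OF F v] by simp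
  also have "\<dots> \<le> vnorm v * vnorm (F *\<^sub>v v)" by (rule cs) (use F v in auto)
  also have "\<dots> \<le> vnorm v * (opnorm F * vnorm v)"
    by (rule mult_left_mono[OF opnorm_bound[OF F v] vnorm_nonneg])
  finally show ?thesis by (simp add: power2_eq_square mult_ac)
qed

lemma qf_kron_unitary_bound:
  assumes C: "C \<in> carrier_mat n n" and n: "0 < n" and W: "W \<in> carrier_mat s s" and U: "adj W * W = 1\<^sub>m s"
    and v: "v \<in> carrier_vec (n*s)"
  shows "cmod (qf (kron C W) v) \<le> opnorm C * (vnorm v)\<^sup>2"
proof -
  have I1: "1\<^sub>m n \<in> carrier_mat n n" and I2: "1\<^sub>m s \<in> carrier_mat s s" by auto
  have KW: "kron (1\<^sub>m n) W \<in> carrier_mat (n*s) (n*s)" using W by auto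
  have KC: "kron C (1\<^sub>m s) \<in> carrier_mat (n*s) (n*s)" using C by auto
  have split: "kron C W = kron C (1\<^sub>m s) * kron (1\<^sub>m n) W"
    using kron_mult[OF C I2 I1 W] C W by simp
  define y where "y = kron (1\<^sub>m n) W *\<^sub>v v"
  have yc: "y \<in> carrier_vec (n*s)" unfolding y_def using mult_mat_vec_carrier[OF KW v] .
  have "of_real ((vnorm y)\<^sup>2) = qf (adj (kron (1\<^sub>m n) W) * kron (1\<^sub>m n) W) v"
    unfolding y_def using qf_adjY_Y[OF KW v] by simp
  also have "adj (kron (1\<^sub>m n) W) * kron (1\<^sub>m n) W = kron (1\<^sub>m n) (adj W * W)"
    unfolding kron_adj using kron_mult[OF I1 adj_carrier[OF W] I1 W] by simp
  also have "\<dots> = 1\<^sub>m (n*s)" unfolding U kron_one_one ..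
  finally have "complex_of_real ((vnorm y)\<^sup>2) = complex_of_real ((vnorm v)\<^sup>2)" using qf_one[OF v] by simp
  hence "(vnorm y)\<^sup>2 = (vnorm v)\<^sup>2" by (simp only: of_real_eq_iff)
  hence yn: "vnorm y = vnorm v" by (rule power2_eq_imp_eq) (simp_all add: vnorm_nonneg)
  have "of_real ((vnorm (kron C (1\<^sub>m s) *\<^sub>v y))\<^sup>2) = qf (adj (kron C (1\<^sub>m s)) * kron C (1\<^sub>m s)) y"
    using qf_adjY_Y[OF KC yc] by simp
  also have "adj (kron C (1\<^sub>m s)) * kron C (1\<^sub>m s) = kron (adj C * C) (1\<^sub>m s)"
    unfolding kron_adj using kron_mult[OF adj_carrier[OF C] I2 C I2] by simp
  also have "qf (kron (adj C * C) (1\<^sub>m s)) y = (\<Sum>b<s. 1\<^sub>m s $$ (b,b) * qf (adj C * C) (blk n s b y))"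
    by (rule qf_kron_diag) (use C yc in auto)
  also have "\<dots> = (\<Sum>b<s. of_real ((vnorm (C *\<^sub>v blk n s b y))\<^sup>2))"
    by (intro sum.cong refl) (simp add: qf_adjY_Y[OF C blk_carrier])
  finally have e: "(vnorm (kron C (1\<^sub>m s) *\<^sub>v y))\<^sup>2 = (\<Sum>b<s. (vnorm (C *\<^sub>v blk n s b y))\<^sup>2)"
    by (simp only: of_real_sum[symmetric] of_real_eq_iff)
  have "(vnorm (kron C (1\<^sub>m s) *\<^sub>v y))\<^sup>2 \<le> (\<Sum>b<s. (opnorm C * vnorm (blk n s b y))\<^sup>2)"
    unfolding e
    by (rule sum_mono) (intro power_mono opnorm_bound[OF C blk_carrier] vnorm_nonneg)
  also have "\<dots> = (opnorm C)\<^sup>2 * (vnorm y)\<^sup>2"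
    by (simp only: power_mult_distrib sum_distrib_left[symmetric] blk_norm[OF yc])
  finally have "(vnorm (kron C (1\<^sub>m s) *\<^sub>v y))\<^sup>2 \<le> (opnorm C * vnorm y)\<^sup>2" by (simp only: power_mult_distrib)
  hence b: "vnorm (kron C (1\<^sub>m s) *\<^sub>v y) \<le> opnorm C * vnorm y"
    by (rule power2_le_imp_le) (use opnorm_nonneg[OF C n] vnorm_nonneg[of y] in simp)
  have qfe: "qf (kron C W) v = ip v (kron C (1\<^sub>m s) *\<^sub>v y)"
  proof -
    have "qf (kron C W) v = ip v (kron C W *\<^sub>v v)" by (rule qf_ip[OF kron_carrier[OF C W] v])
    also have "kron C W *\<^sub>v v = kron C (1\<^sub>m s) *\<^sub>v y"
      unfolding y_def split by (rule assoc_mult_mat_vec[OF KC KW v])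
    finally show ?thesis .
  qed
  have dv: "dim_vec (kron C (1\<^sub>m s) *\<^sub>v y) = dim_vec v" using v C by simp
  have "cmod (qf (kron C W) v) \<le> vnorm v * vnorm (kron C (1\<^sub>m s) *\<^sub>v y)"
    unfolding qfe by (rule cs[OF dv])
  also have "\<dots> \<le> vnorm v * (opnorm C * vnorm y)" by (rule mult_left_mono[OF b vnorm_nonneg])
  finally show ?thesis unfolding yn by (simp add: power2_eq_square mult_ac)
qed

lemma qf9: assumes "U1 \<in> carrier_mat N N" "U2 \<in> carrier_mat N N" "U3 \<in> carrier_mat N N"
  "V1 \<in> carrier_mat N N" "V2 \<in> carrier_mat N N" "V3 \<in> carrier_mat N N" "v \<in> carrier_vec N"
shows "qf ((U1 + U2 - U3) * (V1 + V2 - V3)) v =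
   qf (U1*V1) v + qf (U2*V1) v - qf (U3*V1) v + qf (U1*V2) v + qf (U2*V2) v - qf (U3*V2) v
   - qf (U1*V3) v - qf (U2*V3) v + qf (U3*V3) v"
proof -
  note c = assms
  have a: "U1 + U2 - U3 \<in> carrier_mat N N" "V1 + V2 \<in> carrier_mat N N" "U1 + U2 \<in> carrier_mat N N" using c by auto
  have e1: "(U1 + U2 - U3) * (V1 + V2 - V3) = (U1 + U2 - U3) * (V1 + V2) - (U1 + U2 - U3) * V3"
    by (rule mult_minus_distrib_mat[OF a(1) a(2) c(6)])
  have e2: "(U1 + U2 - U3) * (V1 + V2) = (U1 + U2 - U3) * V1 + (U1 + U2 - U3) * V2"
    by (rule mult_add_distrib_mat[OF a(1) c(4) c(5)])
  have e3: "(U1 + U2 - U3) * W = (U1 + U2) * W - U3 * W" if "W \<in> carrier_mat N N" for W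
    by (rule minus_mult_distrib_mat[OF a(3) c(3) that])
  have e4: "(U1 + U2) * W = U1 * W + U2 * W" if "W \<in> carrier_mat N N" for W
    by (rule add_mult_distrib_mat[OF c(1) c(2) that])
  have q: "qf ((U1 + U2 - U3) * W) v = qf (U1*W) v + qf (U2*W) v - qf (U3*W) v" if W: "W \<in> carrier_mat N N" for W
    unfolding e3[OF W] e4[OF W] using c W
    by (simp add: qf_minus[of _ N] qf_add[of _ N])
  have "qf ((U1 + U2 - U3) * (V1 + V2 - V3)) v = qf ((U1 + U2 - U3) * V1) v + qf ((U1 + U2 - U3) * V2) v - qf ((U1 + U2 - U3) * V3) v"
    unfolding e1 e2 using c a by (simp add: qf_minus[of _ N] qf_add[of _ N])
  thus ?thesis using q c by simp
qed

locale LS =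
  fixes n d m :: nat and \<Gamma> A :: "nat \<Rightarrow> complex mat" and B :: "complex mat"
    and lam :: "nat \<Rightarrow> real" and nu :: complex
  assumes n: "0 < n" and d: "0 < d" and m: "0 < m"
    and cl: "clifford_rep d m \<Gamma>"
    and Ah: "\<forall>i<d. A i \<in> carrier_mat n n \<and> hermitian (A i)"
    and Bc: "B \<in> carrier_mat n n"
begin

definition At where "At i = shiftA n A lam i"
definition X where "X = shiftB n B nu"
definition P where "P = projP m"
definition Q where "Q = projQ m"

lemma Ac: "i < d \<Longrightarrow> A i \<in> carrier_mat n n" using Ah by auto
lemma At_c: "i < d \<Longrightarrow> At i \<in> carrier_mat n n" unfolding At_def shiftA_def using Ac by auto
lemma At_herm: "i < d \<Longrightarrow> adj (At i) = At i"
  unfolding At_def shiftA_def using Ah by (simp add: adj_minus[of _ n n] adj_smult hermitian_def)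
lemma X_c: "X \<in> carrier_mat n n" unfolding X_def shiftB_def using Bc by auto
lemma Xa_c: "adj X \<in> carrier_mat n n" using X_c by auto
lemma G_c: "i < d \<Longrightarrow> \<Gamma> i \<in> carrier_mat (2*m) (2*m)" using cl unfolding clifford_rep_def by blast
lemma G_herm: "i < d \<Longrightarrow> adj (\<Gamma> i) = \<Gamma> i" using cl unfolding clifford_rep_def hermitian_def by blast
lemma G_sq: "i < d \<Longrightarrow> \<Gamma> i * \<Gamma> i = 1\<^sub>m (2*m)" using cl unfolding clifford_rep_def by blast
lemma G_anti: "i < d \<Longrightarrow> j < d \<Longrightarrow> i \<noteq> j \<Longrightarrow> \<Gamma> i * \<Gamma> j = - (\<Gamma> j * \<Gamma> i)"
  using cl unfolding clifford_rep_def by blast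

lemma P_c: "P \<in> carrier_mat (2*m) (2*m)" unfolding P_def projP_def by auto
lemma Q_c: "Q \<in> carrier_mat (2*m) (2*m)" unfolding Q_def projQ_def by auto
lemma P_idx: "b < 2*m \<Longrightarrow> b' < 2*m \<Longrightarrow> P $$ (b,b') = (if b = b' \<and> b < m then 1 else 0)"
  unfolding P_def projP_def by auto
lemma Q_idx: "b < 2*m \<Longrightarrow> b' < 2*m \<Longrightarrow> Q $$ (b,b') = (if b = b' \<and> m \<le> b then 1 else 0)"
  unfolding Q_def projQ_def by auto
lemma P_adj: "adj P = P" using P_c by (intro eq_matI) (auto simp: P_idx)
lemma Q_adj: "adj Q = Q" using Q_c by (intro eq_matI) (auto simp: Q_idx)
lemma PQ_sum: "P + Q = 1\<^sub>m (2*m)" using P_c Q_c by (intro eq_matI) (auto simp: P_idx Q_idx)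

lemma diag_prod: assumes "Y \<in> carrier_mat s s" "Z \<in> carrier_mat s s"
  and "\<And>b b'. b < s \<Longrightarrow> b' < s \<Longrightarrow> Y $$ (b,b') = (if b = b' then y b else 0)"
  and "\<And>b b'. b < s \<Longrightarrow> b' < s \<Longrightarrow> Z $$ (b,b') = (if b = b' then z b else 0)"
  shows "Y * Z = mat s s (\<lambda>(b,b'). if b = b' then y b * z b else 0)"
proof (rule eq_matI)
  fix i j assume ij: "i < dim_row (mat s s (\<lambda>(b,b'). if b = b' then y b * z b else 0))"
    "j < dim_col (mat s s (\<lambda>(b,b'). if b = b' then y b * z b else 0))"
  hence i: "i < s" and j: "j < s" by auto
  have "(Y * Z) $$ (i,j) = (\<Sum>k<s. Y $$ (i,k) * Z $$ (k,j))" by (rule mm_entry[OF assms(1,2) i j])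
  also have "\<dots> = (\<Sum>k<s. if k = i then (if i = j then y i * z i else 0) else 0)"
    by (rule sum.cong) (use assms(3,4) i j in auto)
  also have "\<dots> = (if i = j then y i * z i else 0)" using i by simp
  finally show "(Y * Z) $$ (i,j) = mat s s (\<lambda>(b,b'). if b = b' then y b * z b else 0) $$ (i,j)" using i j by simp
qed (use assms in auto)

lemma PP: "P * P = P"
proof -
  have "P * P = mat (2*m) (2*m) (\<lambda>(b,b'). if b = b' then (if b < m then 1 else 0) * (if b < m then 1 else 0) else 0)"
    by (rule diag_prod[OF P_c P_c]) (auto simp: P_idx)
  also have "\<dots> = P" using P_c by (intro eq_matI) (auto simp: P_idx)
  finally show ?thesis .
qed
lemma QQ: "Q * Q = Q"
proof -
  have "Q * Q = mat (2*m) (2*m) (\<lambda>(b,b'). if b = b' then (if m \<le> b then 1 else 0) * (if m \<le> b then 1 else 0) else 0)"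
    by (rule diag_prod[OF Q_c Q_c]) (auto simp: Q_idx)
  also have "\<dots> = Q" using Q_c by (intro eq_matI) (auto simp: Q_idx)
  finally show ?thesis .
qed
lemma PQ: "P * Q = 0\<^sub>m (2*m) (2*m)"
proof -
  have "P * Q = mat (2*m) (2*m) (\<lambda>(b,b'). if b = b' then (if b < m then 1 else 0) * (if m \<le> b then 1 else 0) else 0)"
    by (rule diag_prod[OF P_c Q_c]) (auto simp: P_idx Q_idx)
  also have "\<dots> = 0\<^sub>m (2*m) (2*m)" by (intro eq_matI) auto
  finally show ?thesis .
qed
lemma QP: "Q * P = 0\<^sub>m (2*m) (2*m)"
proof -
  have "Q * P = mat (2*m) (2*m) (\<lambda>(b,b'). if b = b' then (if m \<le> b then 1 else 0) * (if b < m then 1 else 0) else 0)"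
    by (rule diag_prod[OF Q_c P_c]) (auto simp: P_idx Q_idx)
  also have "\<dots> = 0\<^sub>m (2*m) (2*m)" by (intro eq_matI) auto
  finally show ?thesis .
qed

lemma Keq: "n * (2*m) = 2*m*n" by simp

lemma kc: "Y \<in> carrier_mat n n \<Longrightarrow> Z \<in> carrier_mat (2*m) (2*m) \<Longrightarrow> kron Y Z \<in> carrier_mat (2*m*n) (2*m*n)"
  using kron_carrier[of Y n n Z "2*m" "2*m"] by (simp add: mult.commute)

end

context LS begin

definition Hs where "Hs = msum (2*m*n) (2*m*n) (\<lambda>i. kron (At i) (\<Gamma> i)) d"
definition Gm where "Gm i = kron (At i * X) (\<Gamma> i * P)" for i
definition Hm where "Hm i = kron (At i * adj X) (\<Gamma> i * Q)" for i
definition S where "S = msum n n (\<lambda>i. At i * At i) d"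
definition Qp where "Qp = kron (S + adj X * X) P + kron (S + X * adj X) Q"
definition Cm where "Cm i j = A i * A j - A j * A i" for i j

lemma Hs_c: "Hs \<in> carrier_mat (2*m*n) (2*m*n)" unfolding Hs_def using kc At_c G_c by auto
lemma Gm_c: "i < d \<Longrightarrow> Gm i \<in> carrier_mat (2*m*n) (2*m*n)" unfolding Gm_def
  by (intro kc mult_carrier_mat[OF At_c X_c] mult_carrier_mat[OF G_c P_c])
lemma Hm_c: "i < d \<Longrightarrow> Hm i \<in> carrier_mat (2*m*n) (2*m*n)" unfolding Hm_def
  by (intro kc mult_carrier_mat[OF At_c Xa_c] mult_carrier_mat[OF G_c Q_c])
lemma S_c: "S \<in> carrier_mat n n" unfolding S_def
  by (rule msum_carrier) (rule mult_carrier_mat[OF At_c At_c])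
lemma K1_c: "kron (adj X) P \<in> carrier_mat (2*m*n) (2*m*n)" using kc Xa_c P_c by auto
lemma K2_c: "kron X Q \<in> carrier_mat (2*m*n) (2*m*n)" using kc X_c Q_c by auto
lemma K3_c: "kron X P \<in> carrier_mat (2*m*n) (2*m*n)" using kc X_c P_c by auto
lemma K4_c: "kron (adj X) Q \<in> carrier_mat (2*m*n) (2*m*n)" using kc Xa_c Q_c by auto

lemma L_eq: "localizer n d m \<Gamma> A B lam nu = Hs + kron X P - kron (adj X) Q"
  unfolding localizer_def Hs_def At_def X_def P_def Q_def ..

lemma Hs_adj: "adj Hs = Hs"
proof -
  have "adj Hs = msum (2*m*n) (2*m*n) (\<lambda>i. adj (kron (At i) (\<Gamma> i))) d"
    unfolding Hs_def by (rule msum_adj) (use kc At_c G_c in auto)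
  also have "\<dots> = Hs" unfolding Hs_def
    by (rule msum_cong) (simp add: kron_adj At_herm G_herm)
  finally show ?thesis .
qed

lemma L_adj: "adj (localizer n d m \<Gamma> A B lam nu) = Hs + kron (adj X) P - kron X Q"
proof -
  have "adj (Hs + kron X P - kron (adj X) Q) = adj (Hs + kron X P) - adj (kron (adj X) Q)"
    by (rule adj_minus) (use Hs_c K3_c K4_c in auto)
  also have "adj (Hs + kron X P) = adj Hs + adj (kron X P)" by (rule adj_add[OF Hs_c K3_c])
  finally show ?thesis unfolding L_eq Hs_adj kron_adj P_adj Q_adj by simp
qed

lemma F_eq: "Fmat n d m \<Gamma> A B lam nu = msum (2*m*n) (2*m*n) (\<lambda>i. Gm i + adj (Gm i)) d
   - msum (2*m*n) (2*m*n) (\<lambda>i. Hm i + adj (Hm i)) d"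
  unfolding Fmat_def Let_def Gm_def Hm_def At_def X_def P_def Q_def ..

lemma quad_eq: "quad_mat n d A B lam nu = kron (S + adj X * X) (mat 2 2 (\<lambda>(i,j). if i = 0 \<and> j = 0 then 1 else 0))
    + kron (S + X * adj X) (mat 2 2 (\<lambda>(i,j). if i = 1 \<and> j = 1 then 1 else 0))"
  unfolding quad_mat_def Let_def S_def At_def X_def ..

lemma Gm_adj: "i < d \<Longrightarrow> adj (Gm i) = kron (adj X * At i) (P * \<Gamma> i)"
  unfolding Gm_def kron_adj using At_c X_c G_c P_c
  by (simp add: adj_mult[of _ n n _ n] adj_mult[of _ "2*m" "2*m" _ "2*m"] At_herm G_herm P_adj)

lemma Hm_adj: "i < d \<Longrightarrow> adj (Hm i) = kron (X * At i) (Q * \<Gamma> i)"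
  unfolding Hm_def kron_adj using At_c Xa_c G_c Q_c
  by (simp add: adj_mult[of _ n n _ n] adj_mult[of _ "2*m" "2*m" _ "2*m"] At_herm G_herm Q_adj)

lemma Hs_left: "M \<in> carrier_mat (2*m*n) (2*m*n) \<Longrightarrow> Hs * M = msum (2*m*n) (2*m*n) (\<lambda>i. kron (At i) (\<Gamma> i) * M) d"
  unfolding Hs_def by (rule msum_mult_right) (use kc At_c G_c in auto)

lemma Hs_right: "M \<in> carrier_mat (2*m*n) (2*m*n) \<Longrightarrow> M * Hs = msum (2*m*n) (2*m*n) (\<lambda>i. M * kron (At i) (\<Gamma> i)) d"
  unfolding Hs_def by (rule msum_mult_left) (use kc At_c G_c in auto)

lemma kron_mult_sq: "Y \<in> carrier_mat n n \<Longrightarrow> Z \<in> carrier_mat (2*m) (2*m) \<Longrightarrow> Y' \<in> carrier_mat n n \<Longrightarrow> Z' \<in> carrier_mat (2*m) (2*m)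
  \<Longrightarrow> kron Y Z * kron Y' Z' = kron (Y * Y') (Z * Z')"
  by (rule kron_mult)

lemma HsHs: "Hs * Hs = msum (2*m*n) (2*m*n) (\<lambda>i. msum (2*m*n) (2*m*n) (\<lambda>j. kron (At i * At j) (\<Gamma> i * \<Gamma> j)) d) d"
proof -
  have "Hs * Hs = msum (2*m*n) (2*m*n) (\<lambda>i. kron (At i) (\<Gamma> i) * Hs) d" by (rule Hs_left[OF Hs_c])
  also have "\<dots> = msum (2*m*n) (2*m*n) (\<lambda>i. msum (2*m*n) (2*m*n) (\<lambda>j. kron (At i * At j) (\<Gamma> i * \<Gamma> j)) d) d"
  proof (rule msum_cong)
    fix i assume i: "i < d"
    have "kron (At i) (\<Gamma> i) * Hs = msum (2*m*n) (2*m*n) (\<lambda>j. kron (At i) (\<Gamma> i) * kron (At j) (\<Gamma> j)) d"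
      by (rule Hs_right) (rule kc[OF At_c[OF i] G_c[OF i]])
    also have "\<dots> = msum (2*m*n) (2*m*n) (\<lambda>j. kron (At i * At j) (\<Gamma> i * \<Gamma> j)) d"
      by (rule msum_cong) (rule kron_mult_sq[OF At_c[OF i] G_c[OF i] At_c G_c])
    finally show "kron (At i) (\<Gamma> i) * Hs = msum (2*m*n) (2*m*n) (\<lambda>j. kron (At i * At j) (\<Gamma> i * \<Gamma> j)) d" .
  qed
  finally show ?thesis .
qed

lemma K1Hs: "kron (adj X) P * Hs = msum (2*m*n) (2*m*n) (\<lambda>i. adj (Gm i)) d"
  unfolding Hs_right[OF K1_c]
  by (rule msum_cong) (simp add: Gm_adj kron_mult_sq[OF Xa_c P_c At_c G_c])

lemma K2Hs: "kron X Q * Hs = msum (2*m*n) (2*m*n) (\<lambda>i. adj (Hm i)) d"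
  unfolding Hs_right[OF K2_c]
  by (rule msum_cong) (simp add: Hm_adj kron_mult_sq[OF X_c Q_c At_c G_c])

lemma HsK3: "Hs * kron X P = msum (2*m*n) (2*m*n) Gm d"
  unfolding Hs_left[OF K3_c]
  by (rule msum_cong) (simp add: Gm_def kron_mult_sq[OF At_c G_c X_c P_c])

lemma HsK4: "Hs * kron (adj X) Q = msum (2*m*n) (2*m*n) Hm d"
  unfolding Hs_left[OF K4_c]
  by (rule msum_cong) (simp add: Hm_def kron_mult_sq[OF At_c G_c Xa_c Q_c])

lemma K1K3: "kron (adj X) P * kron X P = kron (adj X * X) P"
  using kron_mult_sq[OF Xa_c P_c X_c P_c] PP by simp
lemma K2K4: "kron X Q * kron (adj X) Q = kron (X * adj X) Q"
  using kron_mult_sq[OF X_c Q_c Xa_c Q_c] QQ by simp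
lemma K2K3: "kron X Q * kron X P = 0\<^sub>m (2*m*n) (2*m*n)"
  using kron_mult_sq[OF X_c Q_c X_c P_c] QP kron_zero_right[of "X * X" "2*m" "2*m"] X_c by (simp add: mult.commute)
lemma K1K4: "kron (adj X) P * kron (adj X) Q = 0\<^sub>m (2*m*n) (2*m*n)"
  using kron_mult_sq[OF Xa_c P_c Xa_c Q_c] PQ kron_zero_right[of "adj X * adj X" "2*m" "2*m"] X_c by (simp add: mult.commute)

lemma T_diag: assumes i: "i < d" and v: "v \<in> carrier_vec (2*m*n)"
  shows "qf (kron (At i * At i) (\<Gamma> i * \<Gamma> i)) v = qf (kron (At i * At i) P) v + qf (kron (At i * At i) Q) v"
proof -
  have AA: "At i * At i \<in> carrier_mat n n" using At_c[OF i] by auto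
  have "kron (At i * At i) (\<Gamma> i * \<Gamma> i) = kron (At i * At i) P + kron (At i * At i) Q"
    unfolding G_sq[OF i] PQ_sum[symmetric] by (rule kron_add_right[OF P_c Q_c])
  thus ?thesis using qf_add[OF kc[OF AA P_c] kc[OF AA Q_c] v] by simp
qed

lemma T_off: assumes i: "i < d" and j: "j < d" and ij: "i \<noteq> j" and v: "v \<in> carrier_vec (2*m*n)"
  shows "qf (kron (At i * At j) (\<Gamma> i * \<Gamma> j)) v + qf (kron (At j * At i) (\<Gamma> j * \<Gamma> i)) v
     = qf (kron (Cm i j) (\<Gamma> i * \<Gamma> j)) v"
proof -
  define W where "W = \<Gamma> i * \<Gamma> j"
  have Wc: "W \<in> carrier_mat (2*m) (2*m)" unfolding W_def using G_c[OF i] G_c[OF j] by auto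
  have a1: "At i * At j \<in> carrier_mat n n" and a2: "At j * At i \<in> carrier_mat n n"
    using At_c[OF i] At_c[OF j] by auto
  have "\<Gamma> j * \<Gamma> i = - W" unfolding W_def using G_anti[OF j i] ij by simp
  hence "kron (At j * At i) (\<Gamma> j * \<Gamma> i) = - kron (At j * At i) W" by (simp add: kron_uminus_right)
  hence "qf (kron (At j * At i) (\<Gamma> j * \<Gamma> i)) v = - qf (kron (At j * At i) W) v"
    using qf_uminus[OF kc[OF a2 Wc] v] by simp
  hence "qf (kron (At i * At j) W) v + qf (kron (At j * At i) (\<Gamma> j * \<Gamma> i)) v
      = qf (kron (At i * At j) W - kron (At j * At i) W) v"
    using qf_minus[OF kc[OF a1 Wc] kc[OF a2 Wc] v] by simp
  also have "kron (At i * At j) W - kron (At j * At i) W = kron (At i * At j - At j * At i) W"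
    by (rule kron_minus_left[symmetric, OF a1 a2])
  also have "At i * At j - At j * At i = Cm i j"
    unfolding At_def shiftA_def Cm_def by (rule shift_comm[OF Ac[OF i] Ac[OF j]])
  finally show ?thesis unfolding W_def .
qed

lemma qf_main: assumes v: "v \<in> carrier_vec (2*m*n)"
  shows "qf (adj (localizer n d m \<Gamma> A B lam nu) * localizer n d m \<Gamma> A B lam nu) v
     = qf Qp v + (\<Sum>i<d. \<Sum>j\<in>{i<..<d}. qf (kron (Cm i j) (\<Gamma> i * \<Gamma> j)) v) + qf (Fmat n d m \<Gamma> A B lam nu) v"
proof -
  define K where "K = 2*m*n"
  have vK: "v \<in> carrier_vec K" using v unfolding K_def .
  have v': "v \<in> carrier_vec (n*(2*m))" unfolding Keq by (rule v)
  define T where "T i j = kron (At i * At j) (\<Gamma> i * \<Gamma> j)" for i j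
  have Tc: "i < d \<Longrightarrow> j < d \<Longrightarrow> T i j \<in> carrier_mat K K" for i j
    unfolding T_def K_def by (intro kc mult_carrier_mat[OF At_c At_c] mult_carrier_mat[OF G_c G_c])
  define tG where "tG = (\<Sum>i<d. qf (Gm i) v)"
  define tGa where "tGa = (\<Sum>i<d. qf (adj (Gm i)) v)"
  define tH where "tH = (\<Sum>i<d. qf (Hm i) v)"
  define tHa where "tHa = (\<Sum>i<d. qf (adj (Hm i)) v)"
  define sP where "sP = (\<Sum>i<d. qf (kron (At i * At i) P) v)"
  define sQ where "sQ = (\<Sum>i<d. qf (kron (At i * At i) Q) v)"
  define tC where "tC = (\<Sum>i<d. \<Sum>j\<in>{i<..<d}. qf (kron (Cm i j) (\<Gamma> i * \<Gamma> j)) v)"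
  define xP where "xP = qf (kron (adj X * X) P) v"
  define xQ where "xQ = qf (kron (X * adj X) Q) v"
  have Gac: "i < d \<Longrightarrow> adj (Gm i) \<in> carrier_mat K K" for i using Gm_c unfolding K_def by auto
  have Hac: "i < d \<Longrightarrow> adj (Hm i) \<in> carrier_mat K K" for i using Hm_c unfolding K_def by auto
  have HsHs': "qf (Hs * Hs) v = (\<Sum>i<d. \<Sum>j<d. qf (T i j) v)"
  proof -
    have "qf (Hs * Hs) v = (\<Sum>i<d. qf (msum K K (T i) d) v)"
      unfolding HsHs T_def[symmetric] K_def[symmetric]
      by (rule qf_msum[OF _ vK]) (intro msum_carrier Tc, auto)
    also have "\<dots> = (\<Sum>i<d. \<Sum>j<d. qf (T i j) v)"
      by (rule sum.cong[OF refl], rule qf_msum[OF _ vK]) (auto intro: Tc)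
    finally show ?thesis .
  qed
  have split: "(\<Sum>i<d. \<Sum>j<d. qf (T i j) v) = sP + sQ + tC"
  proof -
    have "(\<Sum>i<d. \<Sum>j<d. qf (T i j) v) = (\<Sum>i<d. qf (T i i) v) + (\<Sum>i<d. \<Sum>j\<in>{i<..<d}. qf (T i j) v + qf (T j i) v)"
      by (rule double_sum_split)
    also have "(\<Sum>i<d. qf (T i i) v) = sP + sQ"
      unfolding sP_def sQ_def T_def sum.distrib[symmetric] by (rule sum.cong[OF refl]) (simp add: T_diag[OF _ v])
    also have "(\<Sum>i<d. \<Sum>j\<in>{i<..<d}. qf (T i j) v + qf (T j i) v) = tC"
      unfolding tC_def T_def by (intro sum.cong refl) (simp add: T_off[OF _ _ _ v])
    finally show ?thesis .
  qed
  have K1Hs': "qf (kron (adj X) P * Hs) v = tGa" unfolding K1Hs tGa_def K_def[symmetric]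
    by (rule qf_msum[OF _ vK]) (rule Gac)
  have K2Hs': "qf (kron X Q * Hs) v = tHa" unfolding K2Hs tHa_def K_def[symmetric]
    by (rule qf_msum[OF _ vK]) (rule Hac)
  have HsK3': "qf (Hs * kron X P) v = tG" unfolding HsK3 tG_def
    by (rule qf_msum[OF _ v]) (rule Gm_c)
  have HsK4': "qf (Hs * kron (adj X) Q) v = tH" unfolding HsK4 tH_def
    by (rule qf_msum[OF _ v]) (rule Hm_c)
  have z1: "qf (kron X Q * kron X P) v = 0" unfolding K2K3 by (rule qf_zero_mat[OF v])
  have z2: "qf (kron (adj X) P * kron (adj X) Q) v = 0" unfolding K1K4 by (rule qf_zero_mat[OF v])
  have M1: "qf (adj (localizer n d m \<Gamma> A B lam nu) * localizer n d m \<Gamma> A B lam nu) v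
     = (sP + sQ + tC) + tGa - tHa + tG + xP - 0 - tH - 0 + xQ"
    unfolding L_adj unfolding L_eq qf9[OF Hs_c K1_c K2_c Hs_c K3_c K4_c v]
    unfolding HsHs' split K1Hs' K2Hs' HsK3' HsK4' z1 z2 K1K3 K2K4 xP_def xQ_def ..
  have F: "qf (Fmat n d m \<Gamma> A B lam nu) v = tG + tGa - (tH + tHa)"
  proof -
    have c1: "msum (2*m*n) (2*m*n) (\<lambda>i. Gm i + adj (Gm i)) d \<in> carrier_mat (2*m*n) (2*m*n)"
      by (rule msum_carrier) (use Gm_c in auto)
    have c2: "msum (2*m*n) (2*m*n) (\<lambda>i. Hm i + adj (Hm i)) d \<in> carrier_mat (2*m*n) (2*m*n)"
      by (rule msum_carrier) (use Hm_c in auto)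
    have "qf (Fmat n d m \<Gamma> A B lam nu) v = (\<Sum>i<d. qf (Gm i + adj (Gm i)) v) - (\<Sum>i<d. qf (Hm i + adj (Hm i)) v)"
      unfolding F_eq qf_minus[OF c1 c2 v] by (simp add: qf_msum[OF _ v] Gm_c Hm_c)
    also have "\<dots> = tG + tGa - (tH + tHa)"
      unfolding tG_def tGa_def tH_def tHa_def sum.distrib[symmetric]
      by (intro arg_cong2[where f="(-)"] sum.cong refl) (auto intro!: qf_add[OF _ _ v] Gm_c Hm_c)
    finally show ?thesis .
  qed
  have Qp': "qf Qp v = (sP + xP) + (sQ + xQ)"
  proof -
    have XX1: "adj X * X \<in> carrier_mat n n" and XX2: "X * adj X \<in> carrier_mat n n" using X_c by auto
    have kS: "kron S Y = msum (2*m*n) (2*m*n) (\<lambda>i. kron (At i * At i) Y) d" if Y: "Y \<in> carrier_mat (2*m) (2*m)" for Y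
    proof -
      have "\<And>l. l < d \<Longrightarrow> At l * At l \<in> carrier_mat n n" by (rule mult_carrier_mat[OF At_c At_c])
      thus ?thesis unfolding S_def using kron_msum_left[of d "\<lambda>i. At i * At i" n n Y "2*m" "2*m"] Y Keq by simp
    qed
    have qS: "qf (kron S Y) v = (\<Sum>i<d. qf (kron (At i * At i) Y) v)" if Y: "Y \<in> carrier_mat (2*m) (2*m)" for Y
      unfolding kS[OF Y] by (rule qf_msum[OF _ v]) (intro kc mult_carrier_mat[OF At_c At_c] Y)
    have "qf Qp v = qf (kron S P + kron (adj X * X) P) v + qf (kron S Q + kron (X * adj X) Q) v"
      unfolding Qp_def kron_add_left[OF S_c XX1] kron_add_left[OF S_c XX2]
      by (rule qf_add[OF _ _ v]) (intro add_carrier_mat kc S_c XX1 XX2 P_c Q_c)+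
    also have "\<dots> = (sP + xP) + (sQ + xQ)"
      unfolding qf_add[OF kc[OF S_c P_c] kc[OF XX1 P_c] v] qf_add[OF kc[OF S_c Q_c] kc[OF XX2 Q_c] v]
        qS[OF P_c] qS[OF Q_c] sP_def sQ_def xP_def xQ_def ..
    finally show ?thesis .
  qed
  show ?thesis unfolding M1 F Qp' tC_def[symmetric] by (simp add: algebra_simps)
qed

end

context LS begin

lemma Cm_c: "i < d \<Longrightarrow> j < d \<Longrightarrow> Cm i j \<in> carrier_mat n n"
  unfolding Cm_def using Ac[of i] Ac[of j] by (intro minus_carrier_mat mult_carrier_mat) auto

lemma W_unit: assumes i: "i < d" and j: "j < d"
  shows "adj (\<Gamma> i * \<Gamma> j) * (\<Gamma> i * \<Gamma> j) = 1\<^sub>m (2*m)"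
proof -
  have "adj (\<Gamma> i * \<Gamma> j) = \<Gamma> j * \<Gamma> i"
    using adj_mult[OF G_c[OF i] G_c[OF j]] G_herm[OF i] G_herm[OF j] by simp
  hence "adj (\<Gamma> i * \<Gamma> j) * (\<Gamma> i * \<Gamma> j) = \<Gamma> j * (\<Gamma> i * (\<Gamma> i * \<Gamma> j))"
    using G_c[OF i] G_c[OF j] by (simp add: assoc_mult_mat[of _ "2*m" "2*m" _ "2*m" _ "2*m"])
  also have "\<Gamma> i * (\<Gamma> i * \<Gamma> j) = \<Gamma> j"
    using G_c[OF i] G_c[OF j] G_sq[OF i]
    by (simp add: assoc_mult_mat[of _ "2*m" "2*m" _ "2*m" _ "2*m", symmetric])
  finally show ?thesis using G_sq[OF j] by simp
qed

lemma F_c: "Fmat n d m \<Gamma> A B lam nu \<in> carrier_mat (2*m*n) (2*m*n)"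
  unfolding F_eq by (intro minus_carrier_mat msum_carrier add_carrier_mat adj_carrier Gm_c Hm_c)

lemma L_c: "localizer n d m \<Gamma> A B lam nu \<in> carrier_mat (2*m*n) (2*m*n)"
  unfolding L_eq by (intro minus_carrier_mat add_carrier_mat Hs_c K3_c K4_c)

definition M1 where "M1 = adj (localizer n d m \<Gamma> A B lam nu) * localizer n d m \<Gamma> A B lam nu"
definition c0 where "c0 = (\<Sum>i<d. \<Sum>j\<in>{i<..<d}. opnorm (A i * A j - A j * A i)) + opnorm (Fmat n d m \<Gamma> A B lam nu)"

lemma M1_c: "M1 \<in> carrier_mat (2*m*n) (2*m*n)" unfolding M1_def using L_c by auto
lemma M1_herm: "hermitian M1"
  unfolding hermitian_def M1_def using L_c by (simp add: adj_mult[of _ "2*m*n" "2*m*n" _ "2*m*n"])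

lemma main_bound: assumes v: "v \<in> carrier_vec (2*m*n)" and u: "vnorm v = 1"
  shows "cmod (qf M1 v - qf Qp v) \<le> c0"
proof -
  have v': "v \<in> carrier_vec (n*(2*m))" unfolding Keq by (rule v)
  have "qf M1 v - qf Qp v = (\<Sum>i<d. \<Sum>j\<in>{i<..<d}. qf (kron (Cm i j) (\<Gamma> i * \<Gamma> j)) v) + qf (Fmat n d m \<Gamma> A B lam nu) v"
    unfolding M1_def qf_main[OF v] by simp
  hence "cmod (qf M1 v - qf Qp v) \<le> cmod (\<Sum>i<d. \<Sum>j\<in>{i<..<d}. qf (kron (Cm i j) (\<Gamma> i * \<Gamma> j)) v) + cmod (qf (Fmat n d m \<Gamma> A B lam nu) v)"
    by (simp add: norm_triangle_ineq)
  also have "cmod (\<Sum>i<d. \<Sum>j\<in>{i<..<d}. qf (kron (Cm i j) (\<Gamma> i * \<Gamma> j)) v) \<le> (\<Sum>i<d. \<Sum>j\<in>{i<..<d}. opnorm (A i * A j - A j * A i))"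
  proof -
    have "cmod (\<Sum>i<d. \<Sum>j\<in>{i<..<d}. qf (kron (Cm i j) (\<Gamma> i * \<Gamma> j)) v) \<le> (\<Sum>i<d. cmod (\<Sum>j\<in>{i<..<d}. qf (kron (Cm i j) (\<Gamma> i * \<Gamma> j)) v))"
      by (rule norm_sum)
    also have "\<dots> \<le> (\<Sum>i<d. \<Sum>j\<in>{i<..<d}. cmod (qf (kron (Cm i j) (\<Gamma> i * \<Gamma> j)) v))"
      by (intro sum_mono norm_sum)
    also have "\<dots> \<le> (\<Sum>i<d. \<Sum>j\<in>{i<..<d}. opnorm (A i * A j - A j * A i))"
    proof (intro sum_mono)
      fix i j assume i: "i \<in> {..<d}" and j: "j \<in> {i<..<d}"
      hence i': "i < d" and j': "j < d" by auto
      have Wc: "\<Gamma> i * \<Gamma> j \<in> carrier_mat (2*m) (2*m)" using G_c[OF i'] G_c[OF j'] by auto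
      have "cmod (qf (kron (Cm i j) (\<Gamma> i * \<Gamma> j)) v) \<le> opnorm (Cm i j) * (vnorm v)\<^sup>2"
        by (rule qf_kron_unitary_bound[OF Cm_c[OF i' j'] n Wc W_unit[OF i' j'] v'])
      thus "cmod (qf (kron (Cm i j) (\<Gamma> i * \<Gamma> j)) v) \<le> opnorm (A i * A j - A j * A i)"
        using u unfolding Cm_def by simp
    qed
    finally show ?thesis .
  qed
  also have "cmod (qf (Fmat n d m \<Gamma> A B lam nu) v) \<le> opnorm (Fmat n d m \<Gamma> A B lam nu)"
    using qf_bound[OF F_c v] u by simp
  finally show ?thesis unfolding c0_def by simp
qed

end

lemma sum_split_2m: fixes f :: "nat \<Rightarrow> 'a::comm_monoid_add"
  shows "(\<Sum>b<2*m. f b) = (\<Sum>b<m. f b) + (\<Sum>b<m. f (b+m))"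
proof -
  have "{..<2*m} = {..<m} \<union> {m..<m+m}" by auto
  hence "(\<Sum>b<2*m. f b) = (\<Sum>b<m. f b) + (\<Sum>b\<in>{m..<m+m}. f b)"
    by (simp add: sum.union_disjoint[of "{..<m}" "{m..<m+m}"] ivl_disj_int)
  also have "(\<Sum>b\<in>{m..<m+m}. f b) = (\<Sum>b\<in>{0+m..<m+m}. f b)" by simp
  also have "\<dots> = (\<Sum>b\<in>{0..<m}. f (b+m))" by (rule sum.shift_bounds_nat_ivl)
  finally show ?thesis by (simp add: atLeast0LessThan)
qed

context LS begin

definition E0 :: "complex mat" where "E0 = mat 2 2 (\<lambda>(i,j). if i = 0 \<and> j = 0 then 1 else 0)"
definition E1 :: "complex mat" where "E1 = mat 2 2 (\<lambda>(i,j). if i = 1 \<and> j = 1 then 1 else 0)"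
definition RQ where "RQ = S + adj X * X"
definition LQ where "LQ = S + X * adj X"
definition Qm where "Qm = quad_mat n d A B lam nu"

lemma Qm_eq: "Qm = kron RQ E0 + kron LQ E1" unfolding Qm_def quad_eq RQ_def LQ_def E0_def E1_def ..
lemma E0_c: "E0 \<in> carrier_mat 2 2" unfolding E0_def by auto
lemma E1_c: "E1 \<in> carrier_mat 2 2" unfolding E1_def by auto
lemma RQ_c: "RQ \<in> carrier_mat n n" unfolding RQ_def using S_c X_c by auto
lemma LQ_c: "LQ \<in> carrier_mat n n" unfolding LQ_def using S_c X_c by auto
lemma Qm_c: "Qm \<in> carrier_mat (n*2) (n*2)" unfolding Qm_eq using RQ_c LQ_c E0_c E1_c by auto

lemma S_adj: "adj S = S"
proof -
  have "adj S = msum n n (\<lambda>i. adj (At i * At i)) d"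
    unfolding S_def by (rule msum_adj) (rule mult_carrier_mat[OF At_c At_c])
  also have "\<dots> = S" unfolding S_def
    by (rule msum_cong) (simp add: adj_mult[OF At_c At_c] At_herm)
  finally show ?thesis .
qed

lemma RQ_adj: "adj RQ = RQ" unfolding RQ_def
  using adj_add[OF S_c mult_carrier_mat[OF Xa_c X_c]] S_adj adj_mult[OF Xa_c X_c] by simp
lemma LQ_adj: "adj LQ = LQ" unfolding LQ_def
  using adj_add[OF S_c mult_carrier_mat[OF X_c Xa_c]] S_adj adj_mult[OF X_c Xa_c] by simp

lemma Qm_herm: "hermitian Qm"
proof -
  have "adj E0 = E0" unfolding E0_def by (intro eq_matI) auto
  moreover have "adj E1 = E1" unfolding E1_def by (intro eq_matI) auto
  ultimately have "adj Qm = Qm" unfolding Qm_eq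
    using adj_add[OF kron_carrier[OF RQ_c E0_c] kron_carrier[OF LQ_c E1_c]] by (simp add: kron_adj RQ_adj LQ_adj)
  thus ?thesis unfolding hermitian_def using Qm_c by auto
qed

lemma qf_S_nonneg: "w \<in> carrier_vec n \<Longrightarrow> Re (qf S w) \<ge> 0"
proof -
  assume w: "w \<in> carrier_vec n"
  have "qf S w = (\<Sum>i<d. qf (At i * At i) w)" unfolding S_def
    by (rule qf_msum[OF _ w]) (rule mult_carrier_mat[OF At_c At_c])
  also have "\<dots> = (\<Sum>i<d. of_real ((vnorm (At i *\<^sub>v w))\<^sup>2))"
    by (rule sum.cong[OF refl]) (metis lessThan_iff At_herm At_c qf_adjY_Y w)
  finally show ?thesis by (simp add: sum_nonneg)
qed

lemma qf_RQ_nonneg: "w \<in> carrier_vec n \<Longrightarrow> Re (qf RQ w) \<ge> 0"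
  unfolding RQ_def using qf_add[OF S_c mult_carrier_mat[OF Xa_c X_c]] qf_adjY_Y[OF X_c] qf_S_nonneg by simp

lemma qf_LQ_nonneg: "w \<in> carrier_vec n \<Longrightarrow> Re (qf LQ w) \<ge> 0"
proof -
  assume w: "w \<in> carrier_vec n"
  have "qf (X * adj X) w = of_real ((vnorm (adj X *\<^sub>v w))\<^sup>2)"
    using qf_adjY_Y[OF Xa_c w] by simp
  thus ?thesis unfolding LQ_def using qf_add[OF S_c mult_carrier_mat[OF X_c Xa_c] w] qf_S_nonneg[OF w] by simp
qed

lemma qf_Qm: assumes u: "u \<in> carrier_vec (n*2)"
  shows "qf Qm u = qf RQ (blk n 2 0 u) + qf LQ (blk n 2 1 u)"
proof -
  have "qf Qm u = qf (kron RQ E0) u + qf (kron LQ E1) u"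
    unfolding Qm_eq by (rule qf_add[OF kron_carrier[OF RQ_c E0_c] kron_carrier[OF LQ_c E1_c] u])
  also have "qf (kron RQ E0) u = (\<Sum>b<2. E0 $$ (b,b) * qf RQ (blk n 2 b u))"
    by (rule qf_kron_diag[OF RQ_c E0_c _ u]) (auto simp: E0_def)
  also have "\<dots> = qf RQ (blk n 2 0 u)" by (simp add: E0_def numeral_2_eq_2)
  also have "qf (kron LQ E1) u = (\<Sum>b<2. E1 $$ (b,b) * qf LQ (blk n 2 b u))"
    by (rule qf_kron_diag[OF LQ_c E1_c _ u]) (auto simp: E1_def)
  also have "\<dots> = qf LQ (blk n 2 1 u)" by (simp add: E1_def numeral_2_eq_2)
  finally show ?thesis .
qed

lemma qf_Qp: assumes v: "v \<in> carrier_vec (2*m*n)"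
  shows "qf Qp v = (\<Sum>b<m. qf RQ (blk n (2*m) b v) + qf LQ (blk n (2*m) (b+m) v))"
proof -
  have v': "v \<in> carrier_vec (n*(2*m))" unfolding Keq by (rule v)
  have "qf Qp v = qf (kron RQ P) v + qf (kron LQ Q) v"
    unfolding Qp_def RQ_def[symmetric] LQ_def[symmetric] by (rule qf_add[OF kc[OF RQ_c P_c] kc[OF LQ_c Q_c] v])
  also have "qf (kron RQ P) v = (\<Sum>b<2*m. P $$ (b,b) * qf RQ (blk n (2*m) b v))"
    by (rule qf_kron_diag[OF RQ_c P_c _ v']) (auto simp: P_idx)
  also have "\<dots> = (\<Sum>b<m. qf RQ (blk n (2*m) b v))"
    unfolding sum_split_2m by (simp add: P_idx)
  also have "qf (kron LQ Q) v = (\<Sum>b<2*m. Q $$ (b,b) * qf LQ (blk n (2*m) b v))"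
    by (rule qf_kron_diag[OF LQ_c Q_c _ v']) (auto simp: Q_idx)
  also have "\<dots> = (\<Sum>b<m. qf LQ (blk n (2*m) (b+m) v))"
    unfolding sum_split_2m by (simp add: Q_idx)
  finally show ?thesis by (simp add: sum.distrib)
qed

end

context LS begin

lemma blk2_sq: "u \<in> carrier_vec (n*2) \<Longrightarrow> (vnorm u)\<^sup>2 = (vnorm (blk n 2 0 u))\<^sup>2 + (vnorm (blk n 2 1 u))\<^sup>2"
  using blk_norm[of u n 2] by (simp add: numeral_2_eq_2)

lemma Qp_lower: assumes v: "v \<in> carrier_vec (2*m*n)" and u: "vnorm v = 1"
  shows "lambda_min Qm \<le> Re (qf Qp v)"
proof -
  have v': "v \<in> carrier_vec (n*(2*m))" unfolding Keq by (rule v)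
  define ub where "ub b = vec (n*2) (\<lambda>p. if p mod 2 = 0 then v$((p div 2)*(2*m) + b) else v$((p div 2)*(2*m) + (b+m)))" for b
  have ubc: "ub b \<in> carrier_vec (n*2)" for b unfolding ub_def by simp
  have b0: "blk n 2 0 (ub b) = blk n (2*m) b v" for b
    by (intro eq_vecI) (auto simp: blk_def ub_def)
  have b1: "blk n 2 1 (ub b) = blk n (2*m) (b+m) v" for b
  proof (intro eq_vecI)
    fix a assume "a < dim_vec (blk n (2*m) (b+m) v)"
    hence a: "a < n" by simp
    have "a*2+1 < n*2" using a by simp
    moreover have "(a*2+1) mod 2 = 1" "(a*2+1) div 2 = a" by presburger+
    ultimately show "blk n 2 1 (ub b) $ a = blk n (2*m) (b+m) v $ a" using a by (simp add: blk_def ub_def)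
  qed simp
  have qe: "qf Qp v = (\<Sum>b<m. qf Qm (ub b))"
    unfolding qf_Qp[OF v] by (rule sum.cong[OF refl]) (simp only: qf_Qm[OF ubc] b0 b1)
  have np: "0 < n*2" using n by simp
  have "(\<Sum>b<m. lambda_min Qm * (vnorm (ub b))\<^sup>2) \<le> (\<Sum>b<m. Re (qf Qm (ub b)))"
    by (rule sum_mono) (rule rayleigh_gen[OF Qm_c np Qm_herm ubc])
  also have "\<dots> = Re (qf Qp v)" unfolding qe by simp
  finally have ineq: "lambda_min Qm * (\<Sum>b<m. (vnorm (ub b))\<^sup>2) \<le> Re (qf Qp v)" by (simp add: sum_distrib_left)
  have "(\<Sum>b<m. (vnorm (ub b))\<^sup>2) = (\<Sum>b<m. (vnorm (blk n (2*m) b v))\<^sup>2 + (vnorm (blk n (2*m) (b+m) v))\<^sup>2)"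
    by (rule sum.cong[OF refl]) (simp only: blk2_sq[OF ubc] b0 b1)
  also have "\<dots> = (\<Sum>b<2*m. (vnorm (blk n (2*m) b v))\<^sup>2)" unfolding sum_split_2m by (simp add: sum.distrib)
  also have "\<dots> = 1" using blk_norm[OF v'] u by simp
  finally show ?thesis using ineq by simp
qed

lemma Qp_embed: assumes u: "u \<in> carrier_vec (n*2)" and un: "vnorm u = 1"
  shows "\<exists>v \<in> carrier_vec (2*m*n). vnorm v = 1 \<and> qf Qp v = qf Qm u"
proof -
  define v where "v = vec (2*m*n) (\<lambda>p. if p mod (2*m) = 0 then u$((p div (2*m))*2)
      else if p mod (2*m) = m then u$((p div (2*m))*2+1) else 0)"
  have vc: "v \<in> carrier_vec (2*m*n)" unfolding v_def by simp
  have v': "v \<in> carrier_vec (n*(2*m))" unfolding Keq by (rule vc)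
  have bl: "blk n (2*m) b v = vec n (\<lambda>a. if b = 0 then u$(a*2) else if b = m then u$(a*2+1) else 0)" if b: "b < 2*m" for b
  proof (intro eq_vecI)
    fix a assume "a < dim_vec (vec n (\<lambda>a. if b = 0 then u$(a*2) else if b = m then u$(a*2+1) else 0))"
    hence a: "a < n" by simp
    have "a*(2*m)+b < n*(2*m)" using idx_lt[OF a b] .
    hence lt: "a*(2*m)+b < 2*m*n" by (simp add: mult.commute)
    have "(a*(2*m)+b) mod (2*m) = b" "(a*(2*m)+b) div (2*m) = a" using b by auto
    thus "blk n (2*m) b v $ a = vec n (\<lambda>a. if b = 0 then u$(a*2) else if b = m then u$(a*2+1) else 0) $ a"
      using a lt m unfolding blk_def v_def by simp
  qed simp
  have z: "vec n (\<lambda>a. 0) = 0\<^sub>v n" by (intro eq_vecI) auto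
  have blo: "blk n (2*m) b v = (if b = 0 then blk n 2 0 u else 0\<^sub>v n)" if b: "b < m" for b
    using bl[of b] b m z by (auto simp: blk_def)
  have bhi: "blk n (2*m) (b+m) v = (if b = 0 then blk n 2 1 u else 0\<^sub>v n)" if b: "b < m" for b
    using bl[of "b+m"] b m z by (auto simp: blk_def)
  have "qf Qp v = (\<Sum>b<m. if b = 0 then qf RQ (blk n 2 0 u) + qf LQ (blk n 2 1 u) else 0)"
    unfolding qf_Qp[OF vc] by (rule sum.cong[OF refl]) (simp add: blo bhi)
  also have "\<dots> = qf Qm u" using m by (simp add: qf_Qm[OF u])
  finally have q: "qf Qp v = qf Qm u" .
  have "(vnorm v)\<^sup>2 = (\<Sum>b<2*m. (vnorm (blk n (2*m) b v))\<^sup>2)" using blk_norm[OF v'] by simp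
  also have "\<dots> = (\<Sum>b<m. if b = 0 then (vnorm (blk n 2 0 u))\<^sup>2 else 0) + (\<Sum>b<m. if b = 0 then (vnorm (blk n 2 1 u))\<^sup>2 else 0)"
    unfolding sum_split_2m by (intro arg_cong2[where f="(+)"] sum.cong refl) (simp_all add: blo bhi)
  also have "\<dots> = (vnorm u)\<^sup>2" using m blk2_sq[OF u] by simp
  finally have "(vnorm v)\<^sup>2 = 1" using un by simp
  hence "vnorm v = 1" using vnorm_nonneg[of v] by (simp add: power2_eq_1_iff)
  thus ?thesis using vc q by blast
qed

lemma final: "\<bar>clifford_gap n d m \<Gamma> A B lam nu - quad_gap n d A B lam nu\<bar> \<le> sqrt c0"
proof -
  define l1 where "l1 = lambda_min M1"
  define lq where "lq = lambda_min Qm"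
  have K: "0 < 2*m*n" using m n by simp
  have np: "0 < n*2" using n by simp
  obtain v1 where v1: "v1 \<in> carrier_vec (2*m*n)" "vnorm v1 = 1" "Re (qf M1 v1) = l1"
    using rayleigh(2)[OF M1_c K M1_herm] unfolding l1_def by blast
  obtain u1 where u1: "u1 \<in> carrier_vec (n*2)" "vnorm u1 = 1" "Re (qf Qm u1) = lq"
    using rayleigh(2)[OF Qm_c np Qm_herm] unfolding lq_def by blast
  obtain v2 where v2: "v2 \<in> carrier_vec (2*m*n)" "vnorm v2 = 1" "qf Qp v2 = qf Qm u1"
    using Qp_embed[OF u1(1,2)] by blast
  have "l1 \<le> Re (qf M1 v2)" using rayleigh(1)[OF M1_c K M1_herm] v2 unfolding l1_def by blast
  also have "Re (qf M1 v2) \<le> Re (qf Qp v2) + c0"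
    using main_bound[OF v2(1,2)] abs_Re_le_cmod[of "qf M1 v2 - qf Qp v2"] by simp
  finally have a: "l1 \<le> lq + c0" using v2(3) u1(3) by simp
  have "lq \<le> Re (qf Qp v1)" unfolding lq_def by (rule Qp_lower[OF v1(1,2)])
  also have "Re (qf Qp v1) \<le> Re (qf M1 v1) + c0"
    using main_bound[OF v1(1,2)] abs_Re_le_cmod[of "qf M1 v1 - qf Qp v1"] by simp
  finally have b: "lq \<le> l1 + c0" using v1(3) by simp
  have l1nn: "l1 \<ge> 0"
  proof -
    have "qf M1 v1 = of_real ((vnorm (localizer n d m \<Gamma> A B lam nu *\<^sub>v v1))\<^sup>2)"
      unfolding M1_def by (rule qf_adjY_Y[OF L_c v1(1)])
    hence "Re (qf M1 v1) = (vnorm (localizer n d m \<Gamma> A B lam nu *\<^sub>v v1))\<^sup>2"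
      by (metis Re_complex_of_real)
    thus ?thesis using v1(3) by simp
  qed
  have lqnn: "lq \<ge> 0"
    using u1(3) qf_Qm[OF u1(1)] qf_RQ_nonneg[of "blk n 2 0 u1"] qf_LQ_nonneg[of "blk n 2 1 u1"] by simp
  have "\<bar>sqrt l1 - sqrt lq\<bar> \<le> sqrt c0" by (rule sqrt_diff_le[OF l1nn lqnn]) (use a b in linarith)
  moreover have "clifford_gap n d m \<Gamma> A B lam nu = sqrt l1"
    unfolding clifford_gap_def sigma_min_def l1_def M1_def ..
  moreover have "quad_gap n d A B lam nu = sqrt lq" unfolding quad_gap_def lq_def Qm_def ..
  ultimately show ?thesis by simp
qed

end

theorem mainTheorem12:
  fixes n d m :: nat and \<Gamma> A :: "nat \<Rightarrow> complex mat" and B :: "complex mat"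
    and lam :: "nat \<Rightarrow> real" and nu :: complex
  assumes "0 < n" and "0 < d" and "0 < m"
    and "clifford_rep d m \<Gamma>"
    and "\<forall>i<d. A i \<in> carrier_mat n n \<and> hermitian (A i)"
    and "B \<in> carrier_mat n n"
  shows "\<bar>clifford_gap n d m \<Gamma> A B lam nu - quad_gap n d A B lam nu\<bar>
     \<le> sqrt ((\<Sum>i<d. \<Sum>j\<in>{i<..<d}. opnorm (A i * A j - A j * A i))
              + opnorm (Fmat n d m \<Gamma> A B lam nu))"
proof -
  interpret LS n d m \<Gamma> A B lam nu using assms by unfold_locales
  show ?thesis using final unfolding c0_def .
qed

end
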